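(* Assume the standing setup, let $(\hat\sigma,\varphi)$ be fine and let $\nu,\lambda$ be the fixed conformal measure. Then there exists a constant $\hat M<\infty$ such that $$\|\hat{\mathcal L}_x^n\|_\infty=\|\hat{\mathcal L}_x^n1\|_\infty\le\hat M\quad\text{for every }n\ge0\text{ and }m\text{-a.e. }x\in X,$$ where $\|\hat{\mathcal L}_x^n\|_\infty$ is the operator norm on bounded continuous functions with the supremum norm.
   Context: Standing setup. $(X,\mathcal F,m)$ is a complete probability space and $\theta:X\to X$ an invertible measurable $m$-preserving map. $E=\mathbb N$, and $x\mapsto A(x)=(A_{ij}(x))_{i,j\in E}$ is a measurable map into $\{0,1\}$-matrices. $E_x^\infty$ is the set of $\omega\in E^{\mathbb N}$ with $A_{\omega_i\omega_{i+1}}(\theta^i(x))=1$ for all $i\ge0$; $[F]_x=\{\tau\in E_x^\infty:\tau_0\in F\}$, $[e]_x=[\{e\}]_x$, $[0,\dots,l]_x=[\{0,\dots,l\}]_x$; complements in $E_x^\infty$. Metric $d(\omega,\tau)=e^{-\min\{n:\omega_n\ne\tau_n\}}$. $\sigma_x:E_x^\infty\to E_{\theta(x)}^\infty$ the shift, $\Omega=\bigcup_x\{x\}\times E_x^\infty$, $\hat\sigma(x,\omega)=(\theta(x),\sigma_x\omega)$, $\varphi_x=\varphi(x,\cdot)$. $\hat\sigma$ is topologically mixing: for all $a,b\in E$ there is $N$ such that for all $n\ge N$ and all $x$ there is a word $\omega$ of length $n+1$ with $a\omega b$ admissible at $x$. Fix $\alpha>0$; $v_\alpha(g)=\sup\{|g(\tau)-g(\omega)|/d(\tau,\omega)^\alpha:\tau\ne\omega,\tau_0=\omega_0\}$.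 Summable potential: measurable $\varphi:\Omega\to\mathbb R$, $\varphi_x$ continuous, $\operatorname{ess\,sup}_xv_\alpha(\varphi_x)<\infty$, for each $e$ constants $0<c_e<C_e$ with $c_e\le e^{\varphi_x}\le C_e$ on $[e]_x$ a.e., and $\lim_{l\to\infty}\operatorname{ess\,sup}_x\sup\mathcal L_x(1_{[0,\dots,l]_x^c})=0$, where $\mathcal L_xg(\omega)=\sum_{e:\,A_{e\omega_0}(x)=1}g(e\omega)e^{\varphi_x(e\omega)}$, $\omega\in E_{\theta(x)}^\infty$. (A): for each $e$ some $M_e>0$ with $M_e^{-1}\le\mathcal L_x1$ on $[e]_{\theta(x)}$ a.e.; (B): $\lim_{e\to\infty}\operatorname{ess\,sup}_x\sup_{[e]_{\theta(x)}}\mathcal L_x1=0$; (C): there are $0<\kappa<1/4$ and finite $F\subset E$ with $\sup\mathcal L_x(1_{E_x^\infty\setminus[F]_x})\le\kappa\inf_{[F]_{\theta(x)}}\mathcal L_x1$ a.e. Fine: $\varphi$ summable and (A),(B),(C). Random measures: probability measures on $\Omega$ with marginal $m$ and disintegrations $\nu_x$. Fixed conformal measure: a random measure $\nu$ with a measurable $\lambda:X\to(0,\infty)$ such that $\int\mathcal L_xg\,d\nu_{\theta(x)}=\lambda_x\int g\,d\nu_x$ for all bounded continuous $g$ and a.e. $x$, with $\operatorname{ess\,sup}|\log\lambda|<\infty$ and $\nu_x([F]_x)\ge1/2$ a.e. ($F$ from (C)). $\hat{\mathcal L}_x=\lambda_x^{-1}\mathcal L_x$, $\hat{\mathcal L}_x^n=\hat{\mathcal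 L}_{\theta^{n-1}(x)}\circ\cdots\circ\hat{\mathcal L}_x$ (and $\hat{\mathcal L}^0_x$ the identity). *)

theory Defs
  imports "HOL-Analysis.Analysis" "HOL-Probability.Probability"
begin

text \<open>Random countable Markov shift.  The alphabet is E = nat, the base space is a measure
  space M with an invertible map theta, and A x i j (a boolean) encodes A_ij(x) = 1.\<close>

definition Efib :: "('a \<Rightarrow> nat \<Rightarrow> nat \<Rightarrow> bool) \<Rightarrow> ('a \<Rightarrow> 'a) \<Rightarrow> 'a \<Rightarrow> (nat \<Rightarrow> nat) set" where
  "Efib A \<theta> x = {w. \<forall>i. A ((\<theta> ^^ i) x) (w i) (w (Suc i))}"

definition cyl :: "('a \<Rightarrow> nat \<Rightarrow> nat \<Rightarrow> bool) \<Rightarrow> ('a \<Rightarrow> 'a) \<Rightarrow> 'a \<Rightarrow> nat set \<Rightarrow> (nat \<Rightarrow> nat) set" where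
  "cyl A \<theta> x F = {t \<in> Efib A \<theta> x. t 0 \<in> F}"

definition Omega :: "'a measure \<Rightarrow> ('a \<Rightarrow> nat \<Rightarrow> nat \<Rightarrow> bool) \<Rightarrow> ('a \<Rightarrow> 'a) \<Rightarrow> ('a \<times> (nat \<Rightarrow> nat)) set" where
  "Omega M A \<theta> = (SIGMA x:space M. Efib A \<theta> x)"

text \<open>Sigma algebra on E^N: product of discrete sigma algebras (= Borel sets of the metric d).\<close>
definition seqM :: "(nat \<Rightarrow> nat) measure" where
  "seqM = (\<Pi>\<^sub>M i\<in>UNIV. count_space UNIV)"

definition OmegaM :: "'a measure \<Rightarrow> ('a \<Rightarrow> nat \<Rightarrow> nat \<Rightarrow> bool) \<Rightarrow> ('a \<Rightarrow> 'a) \<Rightarrow> ('a \<times> (nat \<Rightarrow> nat)) measure" where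
  "OmegaM M A \<theta> = restrict_space (M \<Otimes>\<^sub>M seqM) (Omega M A \<theta>)"

definition dseq :: "(nat \<Rightarrow> nat) \<Rightarrow> (nat \<Rightarrow> nat) \<Rightarrow> real" where
  "dseq w t = (if w = t then 0 else exp (- real (LEAST n. w n \<noteq> t n)))"

definition dcont_on :: "(nat \<Rightarrow> nat) set \<Rightarrow> ((nat \<Rightarrow> nat) \<Rightarrow> real) \<Rightarrow> bool" where
  "dcont_on S g \<longleftrightarrow> (\<forall>w\<in>S. \<forall>\<epsilon>>0. \<exists>\<delta>>0. \<forall>t\<in>S. dseq t w < \<delta> \<longrightarrow> \<bar>g t - g w\<bar> < \<epsilon>)"

definition Cb :: "(nat \<Rightarrow> nat) set \<Rightarrow> ((nat \<Rightarrow> nat) \<Rightarrow> real) set" where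
  "Cb S = {g. dcont_on S g \<and> (\<exists>B. \<forall>w\<in>S. \<bar>g w\<bar> \<le> B)}"

definition v_alpha :: "real \<Rightarrow> (nat \<Rightarrow> nat) set \<Rightarrow> ((nat \<Rightarrow> nat) \<Rightarrow> real) \<Rightarrow> ereal" where
  "v_alpha \<alpha> S g = (SUP (t, w) \<in> {(t, w). t \<in> S \<and> w \<in> S \<and> t \<noteq> w \<and> t 0 = w 0}.
       ereal (\<bar>g t - g w\<bar> / dseq t w powr \<alpha>))"

definition Lop :: "('a \<Rightarrow> nat \<Rightarrow> nat \<Rightarrow> bool) \<Rightarrow> ('a \<Rightarrow> (nat \<Rightarrow> nat) \<Rightarrow> real) \<Rightarrow> 'a
      \<Rightarrow> ((nat \<Rightarrow> nat) \<Rightarrow> real) \<Rightarrow> (nat \<Rightarrow> nat) \<Rightarrow> real" where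
  "Lop A \<phi> x g w = (\<Sum>\<^sub>\<infinity>e\<in>{e. A x e (w 0)}. g (case_nat e w) * exp (\<phi> x (case_nat e w)))"

definition Lhat :: "('a \<Rightarrow> nat \<Rightarrow> nat \<Rightarrow> bool) \<Rightarrow> ('a \<Rightarrow> (nat \<Rightarrow> nat) \<Rightarrow> real) \<Rightarrow> ('a \<Rightarrow> real) \<Rightarrow> 'a
      \<Rightarrow> ((nat \<Rightarrow> nat) \<Rightarrow> real) \<Rightarrow> (nat \<Rightarrow> nat) \<Rightarrow> real" where
  "Lhat A \<phi> lam x g w = Lop A \<phi> x g w / lam x"

fun Lhat_pow :: "('a \<Rightarrow> nat \<Rightarrow> nat \<Rightarrow> bool) \<Rightarrow> ('a \<Rightarrow> 'a) \<Rightarrow> ('a \<Rightarrow> (nat \<Rightarrow> nat) \<Rightarrow> real) \<Rightarrow> ('a \<Rightarrow> real)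
      \<Rightarrow> nat \<Rightarrow> 'a \<Rightarrow> ((nat \<Rightarrow> nat) \<Rightarrow> real) \<Rightarrow> (nat \<Rightarrow> nat) \<Rightarrow> real" where
  "Lhat_pow A \<theta> \<phi> lam 0 x g = g"
| "Lhat_pow A \<theta> \<phi> lam (Suc n) x g = Lhat A \<phi> lam ((\<theta> ^^ n) x) (Lhat_pow A \<theta> \<phi> lam n x g)"

text \<open>Supremum norm on S (sup of the empty set is 0).\<close>
definition supnorm :: "(nat \<Rightarrow> nat) set \<Rightarrow> ((nat \<Rightarrow> nat) \<Rightarrow> real) \<Rightarrow> ennreal" where
  "supnorm S f = (SUP w\<in>S. ennreal \<bar>f w\<bar>)"

definition opnorm :: "(nat \<Rightarrow> nat) set \<Rightarrow> (nat \<Rightarrow> nat) set \<Rightarrow> (((nat \<Rightarrow> nat) \<Rightarrow> real) \<Rightarrow> (nat \<Rightarrow> nat) \<Rightarrow> real) \<Rightarrow> ennreal" where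
  "opnorm S S' T = (SUP g\<in>{g \<in> Cb S. supnorm S g \<le> 1}. supnorm S' (T g))"

definition standing_setup :: "'a measure \<Rightarrow> ('a \<Rightarrow> 'a) \<Rightarrow> ('a \<Rightarrow> nat \<Rightarrow> nat \<Rightarrow> bool) \<Rightarrow> bool" where
  "standing_setup M \<theta> A \<longleftrightarrow>
     prob_space M \<and> complete_measure M \<and>
     \<theta> \<in> M \<rightarrow>\<^sub>M M \<and> bij_betw \<theta> (space M) (space M) \<and> inv_into (space M) \<theta> \<in> M \<rightarrow>\<^sub>M M \<and>
     distr M M \<theta> = M \<and>
     (\<forall>i j. {x \<in> space M. A x i j} \<in> sets M) \<and>
     \<comment> \<open>topological mixing\<close>
     (\<forall>a b. \<exists>N. \<forall>n\<ge>N. \<forall>x\<in>space M. \<exists>w :: nat \<Rightarrow> nat.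
         w 0 = a \<and> w (n + 2) = b \<and> (\<forall>i<n + 2. A ((\<theta> ^^ i) x) (w i) (w (Suc i))))"

definition summable_potential :: "'a measure \<Rightarrow> ('a \<Rightarrow> 'a) \<Rightarrow> ('a \<Rightarrow> nat \<Rightarrow> nat \<Rightarrow> bool) \<Rightarrow> real
      \<Rightarrow> ('a \<Rightarrow> (nat \<Rightarrow> nat) \<Rightarrow> real) \<Rightarrow> bool" where
  "summable_potential M \<theta> A \<alpha> \<phi> \<longleftrightarrow>
     (\<lambda>(x, w). \<phi> x w) \<in> borel_measurable (OmegaM M A \<theta>) \<and>
     (\<forall>x\<in>space M. dcont_on (Efib A \<theta> x) (\<phi> x)) \<and>
     (\<exists>K::real. AE x in M. v_alpha \<alpha> (Efib A \<theta> x) (\<phi> x) \<le> ereal K) \<and>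
     (\<forall>e. \<exists>c C. 0 < c \<and> c < C \<and>
         (AE x in M. \<forall>w\<in>cyl A \<theta> x {e}. c \<le> exp (\<phi> x w) \<and> exp (\<phi> x w) \<le> C)) \<and>
     \<comment> \<open>lim_l esssup_x sup L_x(1_{[0..l]_x^c}) = 0\<close>
     (\<forall>\<epsilon>>0. \<exists>l0. \<forall>l\<ge>l0. AE x in M. \<forall>w\<in>Efib A \<theta> (\<theta> x).
         Lop A \<phi> x (indicator (Efib A \<theta> x - cyl A \<theta> x {0..l})) w \<le> \<epsilon>)"

definition condA :: "'a measure \<Rightarrow> ('a \<Rightarrow> 'a) \<Rightarrow> ('a \<Rightarrow> nat \<Rightarrow> nat \<Rightarrow> bool) \<Rightarrow> ('a \<Rightarrow> (nat \<Rightarrow> nat) \<Rightarrow> real) \<Rightarrow> bool" where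
  "condA M \<theta> A \<phi> \<longleftrightarrow> (\<forall>e. \<exists>Me>0. AE x in M. \<forall>w\<in>cyl A \<theta> (\<theta> x) {e}. 1 / Me \<le> Lop A \<phi> x (\<lambda>_. 1) w)"

definition condB :: "'a measure \<Rightarrow> ('a \<Rightarrow> 'a) \<Rightarrow> ('a \<Rightarrow> nat \<Rightarrow> nat \<Rightarrow> bool) \<Rightarrow> ('a \<Rightarrow> (nat \<Rightarrow> nat) \<Rightarrow> real) \<Rightarrow> bool" where
  "condB M \<theta> A \<phi> \<longleftrightarrow> (\<forall>\<epsilon>>0. \<exists>e0. \<forall>e\<ge>e0. AE x in M. \<forall>w\<in>cyl A \<theta> (\<theta> x) {e}. Lop A \<phi> x (\<lambda>_. 1) w \<le> \<epsilon>)"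

definition condC_with :: "'a measure \<Rightarrow> ('a \<Rightarrow> 'a) \<Rightarrow> ('a \<Rightarrow> nat \<Rightarrow> nat \<Rightarrow> bool) \<Rightarrow> ('a \<Rightarrow> (nat \<Rightarrow> nat) \<Rightarrow> real)
      \<Rightarrow> real \<Rightarrow> nat set \<Rightarrow> bool" where
  "condC_with M \<theta> A \<phi> \<kappa> F \<longleftrightarrow> 0 < \<kappa> \<and> \<kappa> < 1/4 \<and> finite F \<and>
     (AE x in M. \<forall>w\<in>Efib A \<theta> (\<theta> x). \<forall>w'\<in>cyl A \<theta> (\<theta> x) F.
        Lop A \<phi> x (indicator (Efib A \<theta> x - cyl A \<theta> x F)) w \<le> \<kappa> * Lop A \<phi> x (\<lambda>_. 1) w')"

definition fine_potential :: "'a measure \<Rightarrow> ('a \<Rightarrow> 'a) \<Rightarrow> ('a \<Rightarrow> nat \<Rightarrow> nat \<Rightarrow> bool) \<Rightarrow> real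
      \<Rightarrow> ('a \<Rightarrow> (nat \<Rightarrow> nat) \<Rightarrow> real) \<Rightarrow> nat set \<Rightarrow> bool" where
  "fine_potential M \<theta> A \<alpha> \<phi> F \<longleftrightarrow> summable_potential M \<theta> A \<alpha> \<phi> \<and> condA M \<theta> A \<phi> \<and> condB M \<theta> A \<phi> \<and>
     (\<exists>\<kappa>. condC_with M \<theta> A \<phi> \<kappa> F)"

definition random_measure :: "'a measure \<Rightarrow> ('a \<Rightarrow> 'a) \<Rightarrow> ('a \<Rightarrow> nat \<Rightarrow> nat \<Rightarrow> bool) \<Rightarrow> ('a \<Rightarrow> (nat \<Rightarrow> nat) measure) \<Rightarrow> bool" where
  "random_measure M \<theta> A \<nu> \<longleftrightarrow>
     (\<forall>x\<in>space M. prob_space (\<nu> x) \<and> sets (\<nu> x) = sets (restrict_space seqM (Efib A \<theta> x))) \<and>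
     (\<forall>B\<in>sets (OmegaM M A \<theta>). (\<lambda>x. measure (\<nu> x) {w. (x, w) \<in> B}) \<in> borel_measurable M)"

definition fixed_conformal :: "'a measure \<Rightarrow> ('a \<Rightarrow> 'a) \<Rightarrow> ('a \<Rightarrow> nat \<Rightarrow> nat \<Rightarrow> bool) \<Rightarrow> ('a \<Rightarrow> (nat \<Rightarrow> nat) \<Rightarrow> real)
      \<Rightarrow> nat set \<Rightarrow> ('a \<Rightarrow> (nat \<Rightarrow> nat) measure) \<Rightarrow> ('a \<Rightarrow> real) \<Rightarrow> bool" where
  "fixed_conformal M \<theta> A \<phi> F \<nu> lam \<longleftrightarrow>
     random_measure M \<theta> A \<nu> \<and>
     lam \<in> borel_measurable M \<and> (\<forall>x\<in>space M. 0 < lam x) \<and>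
     (AE x in M. \<forall>g\<in>Cb (Efib A \<theta> x).
        (\<integral>w. Lop A \<phi> x g w \<partial>\<nu> (\<theta> x)) = lam x * (\<integral>w. g w \<partial>\<nu> x)) \<and>
     (\<exists>K::real. AE x in M. \<bar>ln (lam x)\<bar> \<le> K) \<and>
     (AE x in M. measure (\<nu> x) (cyl A \<theta> x F) \<ge> 1/2)"

end

theory Submission
  imports Defs
begin

lemma Efib_cons:
  "case_nat e w \<in> Efib A \<theta> y \<longleftrightarrow> A y e (w 0) \<and> w \<in> Efib A \<theta> (\<theta> y)"
proof -
  have "(\<forall>i. A ((\<theta> ^^ i) y) (case_nat e w i) (case_nat e w (Suc i))) \<longleftrightarrow>
        A y e (w 0) \<and> (\<forall>i. A ((\<theta> ^^ i) (\<theta> y)) (w i) (w (Suc i)))"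
  proof
    assume H: "\<forall>i. A ((\<theta> ^^ i) y) (case_nat e w i) (case_nat e w (Suc i))"
    have "A y e (w 0)" using H[rule_format, of 0] by simp
    moreover have "A ((\<theta> ^^ i) (\<theta> y)) (w i) (w (Suc i))" for i
      using H[rule_format, of "Suc i"] by (simp add: funpow_Suc_right del: funpow.simps)
    ultimately show "A y e (w 0) \<and> (\<forall>i. A ((\<theta> ^^ i) (\<theta> y)) (w i) (w (Suc i)))" by blast
  next
    assume H: "A y e (w 0) \<and> (\<forall>i. A ((\<theta> ^^ i) (\<theta> y)) (w i) (w (Suc i)))"
    show "\<forall>i. A ((\<theta> ^^ i) y) (case_nat e w i) (case_nat e w (Suc i))"
    proof
      fix i show "A ((\<theta> ^^ i) y) (case_nat e w i) (case_nat e w (Suc i))"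
        using H by (cases i) (simp_all add: funpow_Suc_right del: funpow.simps)
    qed
  qed
  then show ?thesis by (simp add: Efib_def)
qed

lemma Efib_iter:
  "w \<in> Efib A \<theta> ((\<theta> ^^ m) x) \<longleftrightarrow> (\<forall>i. A ((\<theta> ^^ (m + i)) x) (w i) (w (Suc i)))"
  by (simp add: Efib_def funpow_add add.commute)

locale fib =
  fixes A :: "'a \<Rightarrow> nat \<Rightarrow> nat \<Rightarrow> bool" and \<theta> :: "'a \<Rightarrow> 'a" and \<phi> :: "'a \<Rightarrow> (nat \<Rightarrow> nat) \<Rightarrow> real" and y :: 'a
  assumes summ: "\<And>w. w \<in> Efib A \<theta> (\<theta> y) \<Longrightarrow>
     (\<lambda>e. exp (\<phi> y (case_nat e w))) summable_on {e. A y e (w 0)}"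
begin

abbreviation "S \<equiv> Efib A \<theta> y"
abbreviation "S' \<equiv> Efib A \<theta> (\<theta> y)"
abbreviation "L \<equiv> Lop A \<phi> y"

lemma cons_in: "w \<in> S' \<Longrightarrow> e \<in> {e. A y e (w 0)} \<Longrightarrow> case_nat e w \<in> S"
  by (simp add: Efib_cons)

lemma term_summable_abs:
  assumes G: "\<And>v. v \<in> S \<Longrightarrow> \<bar>g v\<bar> \<le> G" and w: "w \<in> S'"
  shows "(\<lambda>e. norm (g (case_nat e w) * exp (\<phi> y (case_nat e w)))) summable_on {e. A y e (w 0)}"
proof -
  have "(\<lambda>e. norm (g (case_nat e w) * exp (\<phi> y (case_nat e w)))) summable_on {e. A y e (w 0)}"
  proof (rule summable_on_comparison_test)
    show "(\<lambda>e. G * exp (\<phi> y (case_nat e w))) summable_on {e. A y e (w 0)}"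
      by (rule summable_on_cmult_right[OF summ[OF w]])
    fix e assume "e \<in> {e. A y e (w 0)}"
    then have "case_nat e w \<in> S" using cons_in w by blast
    then show "norm (g (case_nat e w) * exp (\<phi> y (case_nat e w))) \<le> G * exp (\<phi> y (case_nat e w))"
      using G by (simp add: abs_mult)
  qed simp
  then show ?thesis by simp
qed

lemma term_summable:
  assumes G: "\<And>v. v \<in> S \<Longrightarrow> \<bar>g v\<bar> \<le> G" and w: "w \<in> S'"
  shows "(\<lambda>e. g (case_nat e w) * exp (\<phi> y (case_nat e w))) summable_on {e. A y e (w 0)}"
proof -
  have "(\<lambda>e. norm (g (case_nat e w) * exp (\<phi> y (case_nat e w)))) summable_on {e. A y e (w 0)}"
    by (rule term_summable_abs[of g G w]) (use G w in auto)
  then show ?thesis by (rule abs_summable_summable)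
qed

lemma L_add:
  assumes "\<And>v. v \<in> S \<Longrightarrow> \<bar>g v\<bar> \<le> G" "\<And>v. v \<in> S \<Longrightarrow> \<bar>h v\<bar> \<le> H" "w \<in> S'"
  shows "L (\<lambda>v. g v + h v) w = L g w + L h w"
  unfolding Lop_def distrib_right
  by (rule infsum_add[OF term_summable term_summable]) (use assms in auto)

lemma L_cmult: "L (\<lambda>v. c * g v) w = c * L g w"
  unfolding Lop_def mult.assoc
  by (cases "c = 0") (auto simp: infsum_cmult_right')

lemma L_mono:
  assumes "\<And>v. v \<in> S \<Longrightarrow> \<bar>g v\<bar> \<le> G" "\<And>v. v \<in> S \<Longrightarrow> \<bar>h v\<bar> \<le> H" "w \<in> S'"
    and "\<And>v. v \<in> S \<Longrightarrow> g v \<le> h v"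
  shows "L g w \<le> L h w"
  unfolding Lop_def
proof (rule infsum_mono[OF term_summable term_summable])
  fix e assume "e \<in> {e. A y e (w 0)}"
  then have "case_nat e w \<in> S" using cons_in assms by blast
  then show "g (case_nat e w) * exp (\<phi> y (case_nat e w)) \<le> h (case_nat e w) * exp (\<phi> y (case_nat e w))"
    using assms by simp
qed (use assms in auto)

lemma L_nonneg:
  assumes "\<And>v. v \<in> S \<Longrightarrow> 0 \<le> g v" "w \<in> S'"
  shows "0 \<le> L g w"
  unfolding Lop_def using assms cons_in by (intro infsum_nonneg) auto

lemma L_abs:
  assumes "\<And>v. v \<in> S \<Longrightarrow> \<bar>g v\<bar> \<le> h v" "\<And>v. v \<in> S \<Longrightarrow> \<bar>h v\<bar> \<le> H" "w \<in> S'"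
  shows "\<bar>L g w\<bar> \<le> L h w"
proof -
  have G: "\<And>v. v \<in> S \<Longrightarrow> \<bar>g v\<bar> \<le> H" using assms by force
  have "\<bar>L g w\<bar> \<le> (\<Sum>\<^sub>\<infinity>e\<in>{e. A y e (w 0)}. norm (g (case_nat e w) * exp (\<phi> y (case_nat e w))))"
    unfolding Lop_def using norm_infsum_bound[OF term_summable_abs[OF G assms(3)]]
    by simp
  also have "\<dots> \<le> L h w" unfolding Lop_def
  proof (rule infsum_mono)
    show "(\<lambda>e. norm (g (case_nat e w) * exp (\<phi> y (case_nat e w)))) summable_on {e. A y e (w 0)}"
      by (rule term_summable_abs[OF G assms(3)])
    show "(\<lambda>e. h (case_nat e w) * exp (\<phi> y (case_nat e w))) summable_on {e. A y e (w 0)}"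
      by (rule term_summable[OF assms(2,3)])
    fix e assume "e \<in> {e. A y e (w 0)}"
    then have "case_nat e w \<in> S" using cons_in assms by blast
    then show "norm (g (case_nat e w) * exp (\<phi> y (case_nat e w))) \<le> h (case_nat e w) * exp (\<phi> y (case_nat e w))"
      using assms by (simp add: abs_mult)
  qed
  finally show ?thesis .
qed

lemma L_ge_term:
  assumes "\<And>v. v \<in> S \<Longrightarrow> 0 \<le> g v" "\<And>v. v \<in> S \<Longrightarrow> g v \<le> G" "w \<in> S'" "A y a (w 0)"
  shows "g (case_nat a w) * exp (\<phi> y (case_nat a w)) \<le> L g w"
proof -
  have G: "\<And>v. v \<in> S \<Longrightarrow> \<bar>g v\<bar> \<le> G" using assms by force
  have "(\<Sum>\<^sub>\<infinity>e\<in>{a}. g (case_nat e w) * exp (\<phi> y (case_nat e w))) \<le> L g w"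
    unfolding Lop_def
    by (rule infsum_mono_neutral[OF _ term_summable[OF G assms(3)]])
      (use assms cons_in in auto)
  then show ?thesis by simp
qed

end


definition nb :: "(nat \<Rightarrow> nat) set \<Rightarrow> (nat \<Rightarrow> nat) \<Rightarrow> (nat \<Rightarrow> nat) filter" where
  "nb S w = (INF k. principal {t\<in>S. \<forall>j\<le>k. t j = w j})"

lemma eventually_nb: "eventually P (nb S w) \<longleftrightarrow> (\<exists>k. \<forall>t\<in>S. (\<forall>j\<le>k. t j = w j) \<longrightarrow> P t)"
proof -
  have d: "\<And>a b. \<exists>x\<in>UNIV. principal {t \<in> S. \<forall>j\<le>x. t j = w j}
          \<le> principal {t \<in> S. \<forall>j\<le>a. t j = w j} \<sqinter> principal {t \<in> S. \<forall>j\<le>b. t j = w j}"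
  proof -
    fix a b :: nat
    show "\<exists>x\<in>UNIV. principal {t \<in> S. \<forall>j\<le>x. t j = w j}
          \<le> principal {t \<in> S. \<forall>j\<le>a. t j = w j} \<sqinter> principal {t \<in> S. \<forall>j\<le>b. t j = w j}"
      by (rule bexI[of _ "max a b"]) auto
  qed
  show ?thesis unfolding nb_def
    apply (subst eventually_INF_base)
      apply (use d in auto)[2]
    apply (auto simp: eventually_principal)
    done
qed

lemma dseq_agree: assumes "\<forall>j\<le>k. t j = w j" shows "dseq t w \<le> exp (- real (Suc k))"
proof (cases "t = w")
  case False
  then obtain n where n: "t n \<noteq> w n" by auto
  have "Suc k \<le> (LEAST n. t n \<noteq> w n)"
  proof (rule ccontr)
    assume "\<not> ?thesis"
    then have "(LEAST n. t n \<noteq> w n) \<le> k" by simp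
    moreover have "t (LEAST n. t n \<noteq> w n) \<noteq> w (LEAST n. t n \<noteq> w n)" by (rule LeastI[of "\<lambda>n. t n \<noteq> w n", OF n])
    ultimately show False using assms by auto
  qed
  then show ?thesis using False by (simp add: dseq_def)
qed (simp add: dseq_def)

lemma dseq_lt_agree: assumes "dseq t w < exp (- real k)" shows "\<forall>j\<le>k. t j = w j"
proof (cases "t = w")
  case False
  then have "exp (- real (LEAST n. t n \<noteq> w n)) < exp (- real k)" using assms by (simp add: dseq_def)
  then have "k < (LEAST n. t n \<noteq> w n)" by simp
  show ?thesis
  proof (intro allI impI)
    fix j assume "j \<le> k"
    then have "j < (LEAST n. t n \<noteq> w n)" using \<open>k < _\<close> by linarith
    from not_less_Least[OF this] show "t j = w j" by simp
  qed
qed simp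

lemma dseq_nonneg: "0 \<le> dseq t w" by (simp add: dseq_def)
lemma dseq_le1: "dseq t w \<le> 1" by (simp add: dseq_def)

lemma dcont_iff: "dcont_on S g \<longleftrightarrow> (\<forall>w\<in>S. (g \<longlongrightarrow> g w) (nb S w))"
proof
  assume H: "dcont_on S g"
  show "\<forall>w\<in>S. (g \<longlongrightarrow> g w) (nb S w)"
  proof (intro ballI tendstoI)
    fix w e assume w: "w \<in> S" and e: "(0::real) < e"
    obtain \<delta> where d: "\<delta> > 0" "\<forall>t\<in>S. dseq t w < \<delta> \<longrightarrow> \<bar>g t - g w\<bar> < e"
      using H w e unfolding dcont_on_def by blast
    obtain k :: nat where k: "- ln \<delta> < real k" using reals_Archimedean2 by blast
    have "exp (- real k) < \<delta>" using k d(1)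
      by (metis exp_less_cancel_iff exp_ln minus_less_iff)
    show "eventually (\<lambda>t. dist (g t) (g w) < e) (nb S w)"
      unfolding eventually_nb
    proof (intro exI[of _ k] ballI impI)
      fix t assume "t \<in> S" "\<forall>j\<le>k. t j = w j"
      then have "dseq t w \<le> exp (- real (Suc k))" by (intro dseq_agree)
      also have "\<dots> \<le> exp (- real k)" by simp
      finally have "dseq t w < \<delta>" using \<open>exp (- real k) < \<delta>\<close> by linarith
      then show "dist (g t) (g w) < e" using d \<open>t \<in> S\<close> by (simp add: dist_real_def)
    qed
  qed
next
  assume H: "\<forall>w\<in>S. (g \<longlongrightarrow> g w) (nb S w)"
  show "dcont_on S g" unfolding dcont_on_def
  proof (intro ballI allI impI)
    fix w e assume w: "w \<in> S" and e: "(0::real) < e"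
    have "eventually (\<lambda>t. dist (g t) (g w) < e) (nb S w)" using H w e tendstoD by blast
    then obtain k where k: "\<forall>t\<in>S. (\<forall>j\<le>k. t j = w j) \<longrightarrow> dist (g t) (g w) < e"
      unfolding eventually_nb by blast
    show "\<exists>\<delta>>0. \<forall>t\<in>S. dseq t w < \<delta> \<longrightarrow> \<bar>g t - g w\<bar> < e"
      using k dseq_lt_agree[of _ w k] by (intro exI[of _ "exp (- real k)"]) (auto simp: dist_real_def)
  qed
qed

lemma filterlim_cons:
  assumes "\<And>t. t \<in> S' \<Longrightarrow> t 0 = w 0 \<Longrightarrow> case_nat e t \<in> S"
  shows "filterlim (case_nat e) (nb S (case_nat e w)) (nb S' w)"
  unfolding filterlim_iff
proof (intro allI impI)
  fix P assume "eventually P (nb S (case_nat e w))"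
  then obtain k where k: "\<forall>t\<in>S. (\<forall>j\<le>k. t j = case_nat e w j) \<longrightarrow> P t" unfolding eventually_nb by blast
  show "eventually (\<lambda>t. P (case_nat e t)) (nb S' w)" unfolding eventually_nb
  proof (intro exI[of _ k] ballI impI)
    fix t assume t: "t \<in> S'" "\<forall>j\<le>k. t j = w j"
    have "case_nat e t \<in> S" using assms t by auto
    moreover have "\<forall>j\<le>k. case_nat e t j = case_nat e w j"
      using t(2) by (auto split: nat.split)
    ultimately show "P (case_nat e t)" using k by blast
  qed
qed

context fib begin

lemma L_indicator:
  assumes "w \<in> S'"
  shows "L (indicator (S - cyl A \<theta> y B)) w = (\<Sum>\<^sub>\<infinity>e\<in>{e. A y e (w 0)} - B. exp (\<phi> y (case_nat e w)))"
  unfolding Lop_def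
  by (rule infsum_cong_neutral) (use assms cons_in in \<open>auto simp: cyl_def indicator_def\<close>)

lemma tail_split:
  assumes G: "\<And>v. v \<in> S \<Longrightarrow> \<bar>g v\<bar> \<le> G" and w: "w \<in> S'"
  shows "L g w = (\<Sum>e\<in>{e. A y e (w 0)} \<inter> {..l}. g (case_nat e w) * exp (\<phi> y (case_nat e w)))
     + (\<Sum>\<^sub>\<infinity>e\<in>{e. A y e (w 0)} - {..l}. g (case_nat e w) * exp (\<phi> y (case_nat e w)))"
proof -
  let ?f = "\<lambda>e. g (case_nat e w) * exp (\<phi> y (case_nat e w))"
  have s: "?f summable_on {e. A y e (w 0)}" by (rule term_summable[OF G w])
  have "L g w = infsum ?f (({e. A y e (w 0)} \<inter> {..l}) \<union> ({e. A y e (w 0)} - {..l}))"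
    unfolding Lop_def by (rule arg_cong[where f="infsum ?f"]) auto
  also have "\<dots> = infsum ?f ({e. A y e (w 0)} \<inter> {..l}) + infsum ?f ({e. A y e (w 0)} - {..l})"
    by (rule infsum_Un_disjoint) (auto intro: summable_on_subset[OF s])
  finally show ?thesis by simp
qed

lemma tail_bound:
  assumes G: "\<And>v. v \<in> S \<Longrightarrow> \<bar>g v\<bar> \<le> G" and w: "w \<in> S'"
  shows "\<bar>\<Sum>\<^sub>\<infinity>e\<in>{e. A y e (w 0)} - B. g (case_nat e w) * exp (\<phi> y (case_nat e w))\<bar>
     \<le> G * (\<Sum>\<^sub>\<infinity>e\<in>{e. A y e (w 0)} - B. exp (\<phi> y (case_nat e w)))"
proof -
  let ?f = "\<lambda>e. g (case_nat e w) * exp (\<phi> y (case_nat e w))"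
  have s: "(\<lambda>e. norm (?f e)) summable_on {e. A y e (w 0)}" by (rule term_summable_abs[OF G w])
  have s2: "(\<lambda>e. exp (\<phi> y (case_nat e w))) summable_on {e. A y e (w 0)} - B"
    by (rule summable_on_subset[OF summ[OF w]]) auto
  have "\<bar>infsum ?f ({e. A y e (w 0)} - B)\<bar> \<le> infsum (\<lambda>e. norm (?f e)) ({e. A y e (w 0)} - B)"
    using norm_infsum_bound[OF summable_on_subset[OF s]] by auto
  also have "\<dots> \<le> infsum (\<lambda>e. G * exp (\<phi> y (case_nat e w))) ({e. A y e (w 0)} - B)"
  proof (rule infsum_mono)
    show "(\<lambda>e. norm (?f e)) summable_on {e. A y e (w 0)} - B" by (rule summable_on_subset[OF s]) auto
    show "(\<lambda>e. G * exp (\<phi> y (case_nat e w))) summable_on {e. A y e (w 0)} - B"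
      by (rule summable_on_cmult_right[OF s2])
    fix e assume "e \<in> {e. A y e (w 0)} - B"
    then have "case_nat e w \<in> S" using cons_in w by blast
    then show "norm (?f e) \<le> G * exp (\<phi> y (case_nat e w))" using G by (simp add: abs_mult)
  qed
  also have "\<dots> = G * (\<Sum>\<^sub>\<infinity>e\<in>{e. A y e (w 0)} - B. exp (\<phi> y (case_nat e w)))"
    by (rule infsum_cmult_right) (use s2 in auto)
  finally show ?thesis .
qed

end

locale fibc = fib +
  fixes BL :: real
  assumes phicont: "dcont_on S (\<phi> y)"
    and tail: "\<And>\<epsilon>. \<epsilon> > 0 \<Longrightarrow> \<exists>l. \<forall>t\<in>S'. (\<Sum>\<^sub>\<infinity>e\<in>{e. A y e (t 0)} - {..l}. exp (\<phi> y (case_nat e t))) \<le> \<epsilon>"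
    and BL: "\<And>t. t \<in> S' \<Longrightarrow> L (\<lambda>_. 1) t \<le> BL"
begin

lemma L_Cb:
  assumes g: "g \<in> Cb S"
  shows "L g \<in> Cb S'"
proof -
  obtain G0 where G0: "\<forall>v\<in>S. \<bar>g v\<bar> \<le> G0" using g unfolding Cb_def by blast
  define G where "G = max G0 0"
  have G: "\<And>v. v \<in> S \<Longrightarrow> \<bar>g v\<bar> \<le> G" using G0 unfolding G_def by force
  have G0': "G \<ge> 0" unfolding G_def by simp
  have gc: "dcont_on S g" using g unfolding Cb_def by blast
  have bound: "\<bar>L g t\<bar> \<le> G * BL" if t: "t \<in> S'" for t
  proof -
    have "\<bar>L g t\<bar> \<le> L (\<lambda>_. G) t"
      by (rule L_abs[of g "\<lambda>_. G" G]) (use G t G0' in auto)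
    also have "L (\<lambda>_. G) t = G * L (\<lambda>_. 1) t" using L_cmult[of G "\<lambda>_. 1"] by simp
    also have "\<dots> \<le> G * BL" using BL[OF t] G0' by (simp add: mult_left_mono)
    finally show ?thesis .
  qed
  have cont: "(L g \<longlongrightarrow> L g w) (nb S' w)" if w: "w \<in> S'" for w
  proof (rule tendstoI)
    fix \<epsilon> :: real assume \<epsilon>: "\<epsilon> > 0"
    obtain l where l: "\<forall>t\<in>S'. (\<Sum>\<^sub>\<infinity>e\<in>{e. A y e (t 0)} - {..l}. exp (\<phi> y (case_nat e t))) \<le> \<epsilon> / (4 * (G + 1))"
      using tail[of "\<epsilon> / (4 * (G + 1))"] \<epsilon> G0' by auto
    define E where "E = {e. A y e (w 0)} \<inter> {..l}"
    let ?fin = "\<lambda>t. \<Sum>e\<in>E. g (case_nat e t) * exp (\<phi> y (case_nat e t))"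
    have tl: "\<bar>\<Sum>\<^sub>\<infinity>e\<in>{e. A y e (t 0)} - {..l}. g (case_nat e t) * exp (\<phi> y (case_nat e t))\<bar> \<le> \<epsilon> / 4"
      if t: "t \<in> S'" for t
    proof -
      have "\<bar>\<Sum>\<^sub>\<infinity>e\<in>{e. A y e (t 0)} - {..l}. g (case_nat e t) * exp (\<phi> y (case_nat e t))\<bar>
            \<le> G * (\<Sum>\<^sub>\<infinity>e\<in>{e. A y e (t 0)} - {..l}. exp (\<phi> y (case_nat e t)))"
        by (rule tail_bound[OF G t])
      also have "\<dots> \<le> G * (\<epsilon> / (4 * (G + 1)))" using l t G0' by (intro mult_left_mono) auto
      also have "\<dots> \<le> \<epsilon> / 4" using G0' \<epsilon> by (simp add: field_simps)
      finally show ?thesis .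
    qed
    have tfin: "(?fin \<longlongrightarrow> ?fin w) (nb S' w)"
    proof (rule tendsto_sum)
      fix e assume "e \<in> E"
      then have e: "A y e (w 0)" unfolding E_def by auto
      have cw: "case_nat e w \<in> S" using cons_in w e by auto
      have fl: "filterlim (case_nat e) (nb S (case_nat e w)) (nb S' w)"
        by (rule filterlim_cons) (use cons_in e in auto)
      have t1: "((\<lambda>t. g (case_nat e t)) \<longlongrightarrow> g (case_nat e w)) (nb S' w)"
        using filterlim_compose[OF _ fl, of g "nhds (g (case_nat e w))"] gc cw
        unfolding dcont_iff by auto
      have t2: "((\<lambda>t. \<phi> y (case_nat e t)) \<longlongrightarrow> \<phi> y (case_nat e w)) (nb S' w)"
        using filterlim_compose[OF _ fl, of "\<phi> y" "nhds (\<phi> y (case_nat e w))"] phicont cw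
        unfolding dcont_iff by auto
      show "((\<lambda>t. g (case_nat e t) * exp (\<phi> y (case_nat e t))) \<longlongrightarrow>
             g (case_nat e w) * exp (\<phi> y (case_nat e w))) (nb S' w)"
        by (intro tendsto_intros t1 t2)
    qed
    have ev1: "eventually (\<lambda>t. dist (?fin t) (?fin w) < \<epsilon> / 2) (nb S' w)"
      using tendstoD[OF tfin, of "\<epsilon>/2"] \<epsilon> by auto
    have ev2: "eventually (\<lambda>t. t \<in> S' \<and> t 0 = w 0) (nb S' w)"
      unfolding eventually_nb by (intro exI[of _ 0]) auto
    show "eventually (\<lambda>t. dist (L g t) (L g w) < \<epsilon>) (nb S' w)"
      using ev1 ev2
    proof eventually_elim
      case (elim t)
      have Lt: "L g t = ?fin t + (\<Sum>\<^sub>\<infinity>e\<in>{e. A y e (t 0)} - {..l}. g (case_nat e t) * exp (\<phi> y (case_nat e t)))"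
        using tail_split[where g=g and G=G and w=t and l=l] G elim unfolding E_def by simp
      have Lw: "L g w = ?fin w + (\<Sum>\<^sub>\<infinity>e\<in>{e. A y e (w 0)} - {..l}. g (case_nat e w) * exp (\<phi> y (case_nat e w)))"
        using tail_split[where g=g and G=G and w=w and l=l] G w unfolding E_def by simp
      show ?case using elim tl[of t] tl[OF w] unfolding Lt Lw dist_real_def by linarith
    qed
  qed
  show ?thesis unfolding Cb_def dcont_iff using cont bound by blast
qed

end


lemma Cb_divide: assumes "g \<in> Cb S" shows "(\<lambda>w. g w / c) \<in> Cb S"
proof -
  obtain B where B: "\<forall>w\<in>S. \<bar>g w\<bar> \<le> B" using assms unfolding Cb_def by blast
  have "\<forall>w\<in>S. \<bar>g w / c\<bar> \<le> B / \<bar>c\<bar>"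
    using B by (auto simp: abs_divide divide_right_mono)
  moreover have "dcont_on S (\<lambda>w. g w / c)"
    unfolding dcont_iff
  proof
    fix w assume "w \<in> S"
    then have "(g \<longlongrightarrow> g w) (nb S w)" using assms unfolding Cb_def dcont_iff by blast
    then show "((\<lambda>w. g w / c) \<longlongrightarrow> g w / c) (nb S w)" unfolding divide_inverse by (rule tendsto_mult_right)
  qed
  ultimately show ?thesis unfolding Cb_def by blast
qed

lemma Cb_const: "(\<lambda>_. a) \<in> Cb S"
  unfolding Cb_def dcont_on_def by auto

locale core =
  fixes A :: "'a \<Rightarrow> nat \<Rightarrow> nat \<Rightarrow> bool" and \<theta> :: "'a \<Rightarrow> 'a"
    and \<phi> :: "'a \<Rightarrow> (nat \<Rightarrow> nat) \<Rightarrow> real" and lam :: "'a \<Rightarrow> real"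
    and \<nu> :: "'a \<Rightarrow> (nat \<Rightarrow> nat) measure" and x :: 'a
    and \<alpha> V K \<kappa> :: real and F :: "nat set"
    and c C Me :: "nat \<Rightarrow> real" and lt eb :: "nat \<Rightarrow> nat" and Nm :: "nat \<Rightarrow> nat \<Rightarrow> nat"
  assumes condA: "\<And>i e w. w \<in> cyl A \<theta> (\<theta> ((\<theta>^^i) x)) {e} \<Longrightarrow> 1 / Me e \<le> Lop A \<phi> ((\<theta>^^i) x) (\<lambda>_. 1) w"
    and Me_pos: "\<And>e. Me e > 0"
    and alpha_pos: "\<alpha> > 0" and V_nonneg: "V \<ge> 0"
    and hol: "\<And>i t w. t \<in> Efib A \<theta> ((\<theta>^^i) x) \<Longrightarrow> w \<in> Efib A \<theta> ((\<theta>^^i) x) \<Longrightarrow> t 0 = w 0 \<Longrightarrow>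
        \<bar>\<phi> ((\<theta>^^i) x) t - \<phi> ((\<theta>^^i) x) w\<bar> \<le> V * dseq t w powr \<alpha>"
    and c_pos: "\<And>e. c e > 0"
    and bnd: "\<And>i e w. w \<in> cyl A \<theta> ((\<theta>^^i) x) {e} \<Longrightarrow> c e \<le> exp (\<phi> ((\<theta>^^i) x) w) \<and> exp (\<phi> ((\<theta>^^i) x) w) \<le> C e"
    and phicont: "\<And>i. dcont_on (Efib A \<theta> ((\<theta>^^i) x)) (\<phi> ((\<theta>^^i) x))"
    and tailA: "\<And>k i t. t \<in> Efib A \<theta> (\<theta> ((\<theta>^^i) x)) \<Longrightarrow>
        Lop A \<phi> ((\<theta>^^i) x) (indicator (Efib A \<theta> ((\<theta>^^i) x) - cyl A \<theta> ((\<theta>^^i) x) {0..lt k})) t \<le> 1 / Suc k"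
    and condB: "\<And>k i e w. eb k \<le> e \<Longrightarrow> w \<in> cyl A \<theta> (\<theta> ((\<theta>^^i) x)) {e} \<Longrightarrow> Lop A \<phi> ((\<theta>^^i) x) (\<lambda>_. 1) w \<le> 1 / Suc k"
    and kappa: "0 < \<kappa>" "\<kappa> < 1/4" and finF: "finite F"
    and condC: "\<And>i w w'. w \<in> Efib A \<theta> (\<theta> ((\<theta>^^i) x)) \<Longrightarrow> w' \<in> cyl A \<theta> (\<theta> ((\<theta>^^i) x)) F \<Longrightarrow>
        Lop A \<phi> ((\<theta>^^i) x) (indicator (Efib A \<theta> ((\<theta>^^i) x) - cyl A \<theta> ((\<theta>^^i) x) F)) w \<le> \<kappa> * Lop A \<phi> ((\<theta>^^i) x) (\<lambda>_. 1) w'"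
    and conf: "\<And>i g. g \<in> Cb (Efib A \<theta> ((\<theta>^^i) x)) \<Longrightarrow>
        (\<integral>w. Lop A \<phi> ((\<theta>^^i) x) g w \<partial>\<nu> (\<theta> ((\<theta>^^i) x))) = lam ((\<theta>^^i) x) * (\<integral>w. g w \<partial>\<nu> ((\<theta>^^i) x))"
    and lam_pos: "\<And>i. 0 < lam ((\<theta>^^i) x)" and lam_K: "\<And>i. \<bar>ln (lam ((\<theta>^^i) x))\<bar> \<le> K"
    and prob: "\<And>i. prob_space (\<nu> ((\<theta>^^i) x))"
    and sets_nu: "\<And>i. sets (\<nu> ((\<theta>^^i) x)) = sets (restrict_space seqM (Efib A \<theta> ((\<theta>^^i) x)))"
    and half: "\<And>i. measure (\<nu> ((\<theta>^^i) x)) (cyl A \<theta> ((\<theta>^^i) x) F) \<ge> 1/2"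
    and mix: "\<And>a b n i. Nm a b \<le> n \<Longrightarrow> \<exists>w. w 0 = a \<and> w (n + 2) = b \<and>
        (\<forall>j<n + 2. A ((\<theta>^^j) ((\<theta>^^i) x)) (w j) (w (Suc j)))"
begin

abbreviation "y i \<equiv> (\<theta>^^i) x"
abbreviation "S i \<equiv> Efib A \<theta> (y i)"

lemma S_Suc: "S (Suc i) = Efib A \<theta> (\<theta> (y i))" by simp

lemma summ: "w \<in> Efib A \<theta> (\<theta> (y i)) \<Longrightarrow> (\<lambda>e. exp (\<phi> (y i) (case_nat e w))) summable_on {e. A (y i) e (w 0)}"
proof (rule ccontr)
  assume w: "w \<in> Efib A \<theta> (\<theta> (y i))" and ns: "\<not> ?thesis"
  have "w \<in> cyl A \<theta> (\<theta> (y i)) {w 0}" using w by (simp add: cyl_def)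
  then have "1 / Me (w 0) \<le> Lop A \<phi> (y i) (\<lambda>_. 1) w" by (rule condA)
  moreover have "Lop A \<phi> (y i) (\<lambda>_. 1) w = 0" unfolding Lop_def using ns by (simp add: infsum_not_exists)
  ultimately show False using Me_pos[of "w 0"] by simp
qed

sublocale F: fib A \<theta> \<phi> "y i" for i
  by unfold_locales (rule summ)

definition BL where "BL = (\<Sum>e\<le>lt 0. max (C e) 0) + 1"

lemma BL_bound:
  assumes t: "t \<in> Efib A \<theta> (\<theta> (y i))"
  shows "Lop A \<phi> (y i) (\<lambda>_. 1) t \<le> BL"
proof -
  let ?l = "lt 0"
  have "Lop A \<phi> (y i) (\<lambda>_. 1) t = (\<Sum>e\<in>{e. A (y i) e (t 0)} \<inter> {..?l}. 1 * exp (\<phi> (y i) (case_nat e t)))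
     + (\<Sum>\<^sub>\<infinity>e\<in>{e. A (y i) e (t 0)} - {..?l}. 1 * exp (\<phi> (y i) (case_nat e t)))"
    by (rule F.tail_split[where g="\<lambda>_. 1" and G=1]) (use t in auto)
  also have "(\<Sum>e\<in>{e. A (y i) e (t 0)} \<inter> {..?l}. 1 * exp (\<phi> (y i) (case_nat e t))) \<le> (\<Sum>e\<le>?l. max (C e) 0)"
  proof -
    have "(\<Sum>e\<in>{e. A (y i) e (t 0)} \<inter> {..?l}. 1 * exp (\<phi> (y i) (case_nat e t)))
        \<le> (\<Sum>e\<in>{e. A (y i) e (t 0)} \<inter> {..?l}. max (C e) 0)"
    proof (rule sum_mono)
      fix e assume "e \<in> {e. A (y i) e (t 0)} \<inter> {..?l}"
      then have "case_nat e t \<in> cyl A \<theta> (y i) {e}" using t by (simp add: cyl_def Efib_cons)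
      then show "1 * exp (\<phi> (y i) (case_nat e t)) \<le> max (C e) 0" using bnd by force
    qed
    also have "\<dots> \<le> (\<Sum>e\<le>?l. max (C e) 0)" by (rule sum_mono2) auto
    finally show ?thesis .
  qed
  also have "(\<Sum>\<^sub>\<infinity>e\<in>{e. A (y i) e (t 0)} - {..?l}. 1 * exp (\<phi> (y i) (case_nat e t))) \<le> 1"
  proof -
    have "(\<Sum>\<^sub>\<infinity>e\<in>{e. A (y i) e (t 0)} - {..?l}. 1 * exp (\<phi> (y i) (case_nat e t)))
       = Lop A \<phi> (y i) (indicator (S i - cyl A \<theta> (y i) {0..?l})) t"
      using F.L_indicator[of t i "{0..?l}"] t by (simp add: atLeast0AtMost)
    also have "\<dots> \<le> 1 / Suc 0" by (rule tailA[OF t])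
    finally show ?thesis by simp
  qed
  finally show ?thesis unfolding BL_def by simp
qed

lemma tail_inf:
  assumes "\<epsilon> > 0"
  shows "\<exists>l. \<forall>t\<in>Efib A \<theta> (\<theta> (y i)). (\<Sum>\<^sub>\<infinity>e\<in>{e. A (y i) e (t 0)} - {..l}. exp (\<phi> (y i) (case_nat e t))) \<le> \<epsilon>"
proof -
  obtain k :: nat where k: "1 / Suc k < \<epsilon>" using assms
    by (metis nat_approx_posE of_nat_Suc)
  show ?thesis
  proof (intro exI[of _ "lt k"] ballI)
    fix t assume t: "t \<in> Efib A \<theta> (\<theta> (y i))"
    have "(\<Sum>\<^sub>\<infinity>e\<in>{e. A (y i) e (t 0)} - {..lt k}. exp (\<phi> (y i) (case_nat e t)))
       = Lop A \<phi> (y i) (indicator (S i - cyl A \<theta> (y i) {0..lt k})) t"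
      using F.L_indicator[of t i "{0..lt k}"] t by (simp add: atLeast0AtMost)
    also have "\<dots> \<le> 1 / Suc k" by (rule tailA[OF t])
    finally show "(\<Sum>\<^sub>\<infinity>e\<in>{e. A (y i) e (t 0)} - {..lt k}. exp (\<phi> (y i) (case_nat e t))) \<le> \<epsilon>"
      using k by linarith
  qed
qed

sublocale FC: fibc A \<theta> \<phi> "y i" BL for i
  by unfold_locales (use phicont tail_inf BL_bound in auto)

lemma space_nu: "space (\<nu> (y i)) = S i"
proof -
  have "space (\<nu> (y i)) = space (restrict_space seqM (S i))" using sets_nu by (rule sets_eq_imp_space_eq)
  also have "\<dots> = S i" by (simp add: space_restrict_space seqM_def space_PiM)
  finally show ?thesis .
qed

lemma cyl_sets: "cyl A \<theta> (y i) B \<in> sets (\<nu> (y i))"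
proof -
  have m: "{t::nat\<Rightarrow>nat. t 0 \<in> B} \<in> sets seqM"
  proof -
    have "(\<lambda>t::nat\<Rightarrow>nat. t 0) \<in> seqM \<rightarrow>\<^sub>M count_space UNIV"
      unfolding seqM_def by (rule measurable_component_singleton) simp
    then have "(\<lambda>t::nat\<Rightarrow>nat. t 0) -` B \<inter> space seqM \<in> sets seqM" by (rule measurable_sets) simp
    then show ?thesis by (simp add: seqM_def space_PiM vimage_def)
  qed
  have "cyl A \<theta> (y i) B = S i \<inter> {t. t 0 \<in> B}" by (auto simp: cyl_def)
  then show ?thesis using m by (simp add: sets_nu sets_restrict_space)
qed

abbreviation "P n g \<equiv> Lhat_pow A \<theta> \<phi> lam n x g"
abbreviation "f n \<equiv> P n (\<lambda>_. 1)"

lemma P_Suc: "P (Suc n) g = (\<lambda>w. Lop A \<phi> (y n) (P n g) w / lam (y n))"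
  by (rule ext) (simp add: Lhat_def)

lemma P_Cb: "g \<in> Cb (S 0) \<Longrightarrow> P n g \<in> Cb (S n)"
proof (induction n)
  case 0 then show ?case by simp
next
  case (Suc n)
  have "Lop A \<phi> (y n) (P n g) \<in> Cb (Efib A \<theta> (\<theta> (y n)))" by (rule FC.L_Cb[OF Suc.IH[OF Suc.prems]])
  then show ?case unfolding P_Suc by (simp add: Cb_divide)
qed

lemma f_Cb: "f n \<in> Cb (S n)" by (rule P_Cb) (rule Cb_const)

lemma f_bounded: "\<exists>B. \<forall>w\<in>S n. \<bar>f n w\<bar> \<le> B" using f_Cb[of n] unfolding Cb_def by blast

lemma f_nonneg: "w \<in> S n \<Longrightarrow> 0 \<le> f n w"
proof (induction n arbitrary: w)
  case 0 then show ?case by simp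
next
  case (Suc n)
  have "0 \<le> Lop A \<phi> (y n) (f n) w" by (rule F.L_nonneg) (use Suc in auto)
  then show ?case unfolding P_Suc using lam_pos[of n] by simp
qed

lemma f_int: "(\<integral>w. f n w \<partial>\<nu> (y n)) = 1"
proof (induction n)
  case 0 then show ?case using prob_space.prob_space[OF prob[of 0]] by simp
next
  case (Suc n)
  have "(\<integral>w. f (Suc n) w \<partial>\<nu> (y (Suc n))) = (\<integral>w. Lop A \<phi> (y n) (f n) w \<partial>\<nu> (\<theta> (y n))) / lam (y n)"
    unfolding P_Suc by simp
  also have "\<dots> = 1" using conf[OF f_Cb[of n]] Suc lam_pos[of n] by simp
  finally show ?case .
qed

lemma f_integrable: "integrable (\<nu> (y n)) (f n)"
  using f_int[of n] not_integrable_integral_eq by fastforce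

end


lemma dseq_cons: "dseq (case_nat e t) (case_nat e t') = exp (-1) * dseq t t'"
proof (cases "t = t'")
  case False
  then obtain m where m: "t m \<noteq> t' m" by auto
  have ne: "case_nat e t \<noteq> case_nat e t'" using False by (metis nat.case(2) ext)
  have "(LEAST n. case_nat e t n \<noteq> case_nat e t' n) = Suc (LEAST m. case_nat e t (Suc m) \<noteq> case_nat e t' (Suc m))"
    by (rule Least_Suc[of _ "Suc m"]) (use m in auto)
  then have "(LEAST n. case_nat e t n \<noteq> case_nat e t' n) = Suc (LEAST m. t m \<noteq> t' m)" by simp
  then show ?thesis using False ne by (simp add: dseq_def mult_exp_exp)
qed (simp add: dseq_def)

lemma dseq_cons_powr:
  "dseq (case_nat e t) (case_nat e t') powr a = exp (- a) * dseq t t' powr a"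
proof -
  have "dseq (case_nat e t) (case_nat e t') powr a = exp (-1) powr a * dseq t t' powr a"
    unfolding dseq_cons by (simp add: powr_mult dseq_nonneg)
  also have "exp (-1) powr a = exp (- a)" by (simp add: powr_def)
  finally show ?thesis .
qed

context core begin

definition r where "r = exp (- \<alpha>)"
definition cD where "cD = V * r / (1 - r)"

lemma r_props: "0 < r" "r < 1" using alpha_pos by (auto simp: r_def)

lemma cD_eq: "(cD + V) * r = cD"
  using r_props unfolding cD_def by (simp add: field_simps)

lemma cD_nonneg: "cD \<ge> 0" using r_props V_nonneg unfolding cD_def by simp

lemma distortion:
  "\<tau> \<in> S n \<Longrightarrow> \<tau>' \<in> S n \<Longrightarrow> \<tau> 0 = \<tau>' 0 \<Longrightarrow> f n \<tau> \<le> exp (cD * dseq \<tau> \<tau>' powr \<alpha>) * f n \<tau>'"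
proof (induction n arbitrary: \<tau> \<tau>')
  case 0 then show ?case using cD_nonneg by (simp add: dseq_nonneg)
next
  case (Suc n)
  have t: "\<tau> \<in> Efib A \<theta> (\<theta> (y n))" and t': "\<tau>' \<in> Efib A \<theta> (\<theta> (y n))" using Suc.prems by auto
  obtain B where B: "\<forall>w\<in>S n. \<bar>f n w\<bar> \<le> B" using f_bounded by blast
  let ?d = "dseq \<tau> \<tau>' powr \<alpha>"
  let ?T = "{e. A (y n) e (\<tau> 0)}"
  have "Lop A \<phi> (y n) (f n) \<tau> = (\<Sum>\<^sub>\<infinity>e\<in>?T. f n (case_nat e \<tau>) * exp (\<phi> (y n) (case_nat e \<tau>)))"
    unfolding Lop_def ..
  also have "\<dots> \<le> (\<Sum>\<^sub>\<infinity>e\<in>?T. exp (cD * ?d) * (f n (case_nat e \<tau>') * exp (\<phi> (y n) (case_nat e \<tau>'))))"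
  proof (rule infsum_mono)
    show "(\<lambda>e. f n (case_nat e \<tau>) * exp (\<phi> (y n) (case_nat e \<tau>))) summable_on ?T"
      by (rule F.term_summable[where G=B]) (use B t in auto)
    have "(\<lambda>e. f n (case_nat e \<tau>') * exp (\<phi> (y n) (case_nat e \<tau>'))) summable_on {e. A (y n) e (\<tau>' 0)}"
      by (rule F.term_summable[where G=B]) (use B t' in auto)
    then show "(\<lambda>e. exp (cD * ?d) * (f n (case_nat e \<tau>') * exp (\<phi> (y n) (case_nat e \<tau>')))) summable_on ?T"
      using Suc.prems(3) by (intro summable_on_cmult_right) simp
  next
    fix e assume "e \<in> ?T"
    then have c1: "case_nat e \<tau> \<in> S n" and c2: "case_nat e \<tau>' \<in> S n"
      using t t' Suc.prems(3) by (auto simp: Efib_cons)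
    have dd: "dseq (case_nat e \<tau>) (case_nat e \<tau>') powr \<alpha> = r * ?d"
      unfolding dseq_cons_powr r_def ..
    have i1: "f n (case_nat e \<tau>) \<le> exp (cD * (r * ?d)) * f n (case_nat e \<tau>')"
      using Suc.IH[OF c1 c2] dd by simp
    have "\<bar>\<phi> (y n) (case_nat e \<tau>) - \<phi> (y n) (case_nat e \<tau>')\<bar> \<le> V * (r * ?d)"
      using hol[OF c1 c2] dd by simp
    then have i2: "exp (\<phi> (y n) (case_nat e \<tau>)) \<le> exp (V * (r * ?d)) * exp (\<phi> (y n) (case_nat e \<tau>'))"
      by (simp add: mult_exp_exp)
    have f0: "0 \<le> f n (case_nat e \<tau>)" by (rule f_nonneg[OF c1])
    have "f n (case_nat e \<tau>) * exp (\<phi> (y n) (case_nat e \<tau>))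
        \<le> (exp (cD * (r * ?d)) * f n (case_nat e \<tau>')) * (exp (V * (r * ?d)) * exp (\<phi> (y n) (case_nat e \<tau>')))"
      by (rule mult_mono[OF i1 i2]) (use f0 f_nonneg[OF c2] in auto)
    also have "\<dots> = exp ((cD + V) * r * ?d) * (f n (case_nat e \<tau>') * exp (\<phi> (y n) (case_nat e \<tau>')))"
      by (simp add: mult_exp_exp algebra_simps)
    also have "(cD + V) * r * ?d = cD * ?d" using cD_eq by simp
    finally show "f n (case_nat e \<tau>) * exp (\<phi> (y n) (case_nat e \<tau>))
        \<le> exp (cD * ?d) * (f n (case_nat e \<tau>') * exp (\<phi> (y n) (case_nat e \<tau>')))" .
  qed
  also have "\<dots> = exp (cD * ?d) * Lop A \<phi> (y n) (f n) \<tau>'"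
  proof -
    have "(\<lambda>e. f n (case_nat e \<tau>') * exp (\<phi> (y n) (case_nat e \<tau>'))) summable_on {e. A (y n) e (\<tau>' 0)}"
      by (rule F.term_summable[where G=B]) (use B t' in auto)
    then show ?thesis
      unfolding Lop_def using Suc.prems(3) by (subst infsum_cmult_right) auto
  qed
  finally have "Lop A \<phi> (y n) (f n) \<tau> \<le> exp (cD * ?d) * Lop A \<phi> (y n) (f n) \<tau>'" .
  then show ?case unfolding P_Suc using lam_pos[of n] by (simp add: divide_right_mono)
qed

definition D where "D = exp cD"

lemma distortion': "\<tau> \<in> S n \<Longrightarrow> \<tau>' \<in> S n \<Longrightarrow> \<tau> 0 = \<tau>' 0 \<Longrightarrow> f n \<tau> \<le> D * f n \<tau>'"
proof -
  assume a: "\<tau> \<in> S n" "\<tau>' \<in> S n" "\<tau> 0 = \<tau>' 0"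
  have "dseq \<tau> \<tau>' powr \<alpha> \<le> 1"
    using dseq_le1[of \<tau> \<tau>'] dseq_nonneg[of \<tau> \<tau>'] alpha_pos by (simp add: powr_le1)
  then have "exp (cD * dseq \<tau> \<tau>' powr \<alpha>) \<le> D"
    unfolding D_def using cD_nonneg by (simp add: mult_left_le)
  then show "f n \<tau> \<le> D * f n \<tau>'"
    using distortion[OF a] f_nonneg[OF a(2)] by (meson mult_right_mono order.trans)
qed

end


context core begin

lemma F_nonempty: "F \<noteq> {}"
proof
  assume "F = {}"
  then have "cyl A \<theta> (y 0) F = {}" by (simp add: cyl_def)
  then show False using half[of 0] by simp
qed

lemma exists_big_cyl: "\<exists>b\<in>F. measure (\<nu> (y m)) (cyl A \<theta> (y m) {b}) \<ge> 1 / (2 * card F)"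
proof (rule ccontr)
  assume "\<not> ?thesis"
  then have lt: "\<And>b. b \<in> F \<Longrightarrow> measure (\<nu> (y m)) (cyl A \<theta> (y m) {b}) < 1 / (2 * card F)" by force
  have "cyl A \<theta> (y m) F = (\<Union>b\<in>F. cyl A \<theta> (y m) {b})" by (auto simp: cyl_def)
  then have "measure (\<nu> (y m)) (cyl A \<theta> (y m) F) \<le> (\<Sum>b\<in>F. measure (\<nu> (y m)) (cyl A \<theta> (y m) {b}))"
    using measure_UNION_le[OF finF, of "\<lambda>b. cyl A \<theta> (y m) {b}" "\<nu> (y m)"] cyl_sets by simp
  also have "\<dots> < (\<Sum>b\<in>F. 1 / (2 * card F))"
    by (rule sum_strict_mono[OF finF F_nonempty lt])
  also have "\<dots> = 1/2" using finF F_nonempty by simp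
  finally show False using half[of m] by simp
qed

lemma exists_small_point:
  assumes b: "measure (\<nu> (y m)) (cyl A \<theta> (y m) {b}) \<ge> 1 / (2 * card F)"
  shows "\<exists>\<tau>\<in>cyl A \<theta> (y m) {b}. f m \<tau> \<le> 4 * card F"
proof (rule ccontr)
  assume "\<not> ?thesis"
  then have gt: "\<And>\<tau>. \<tau> \<in> cyl A \<theta> (y m) {b} \<Longrightarrow> 4 * card F < f m \<tau>" by force
  interpret P: prob_space "\<nu> (y m)" by (rule prob)
  have cF: "card F > 0" using finF F_nonempty by (simp add: card_gt_0_iff)
  have int2: "integrable (\<nu> (y m)) (\<lambda>w. (4 * real (card F)) * indicator (cyl A \<theta> (y m) {b}) w)"
  proof (intro integrable_mult_right)
    have e: "cyl A \<theta> (y m) {b} \<inter> space (\<nu> (y m)) = cyl A \<theta> (y m) {b}" by (auto simp: space_nu cyl_def)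
    show "integrable (\<nu> (y m)) (indicator (cyl A \<theta> (y m) {b}) :: _ \<Rightarrow> real)"
      unfolding integrable_indicator_iff e
    proof
      show "cyl A \<theta> (y m) {b} \<in> sets (\<nu> (y m))" by (rule cyl_sets)
      have "emeasure (\<nu> (y m)) (cyl A \<theta> (y m) {b}) \<noteq> \<top>" by (rule P.emeasure_finite)
      then show "emeasure (\<nu> (y m)) (cyl A \<theta> (y m) {b}) < \<infinity>" by (simp add: less_top[symmetric])
    qed
  qed
  have "(\<integral>w. (4 * real (card F)) * indicator (cyl A \<theta> (y m) {b}) w \<partial>\<nu> (y m)) \<le> (\<integral>w. f m w \<partial>\<nu> (y m))"
  proof (rule integral_mono[OF int2 f_integrable])
    fix w assume "w \<in> space (\<nu> (y m))"
    then have w: "w \<in> S m" by (simp add: space_nu)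
    show "(4 * real (card F)) * indicator (cyl A \<theta> (y m) {b}) w \<le> f m w"
      using gt[of w] f_nonneg[OF w] by (cases "w \<in> cyl A \<theta> (y m) {b}") (auto simp: indicator_def)
  qed
  also have "\<dots> = 1" by (rule f_int)
  finally have "(4 * real (card F)) * measure (\<nu> (y m)) (cyl A \<theta> (y m) {b}) \<le> 1"
    using cyl_sets[of m "{b}"] by (simp add: Int_absorb2 space_nu cyl_def)
  moreover have "(4 * real (card F)) * measure (\<nu> (y m)) (cyl A \<theta> (y m) {b}) \<ge> (4 * real (card F)) * (1 / (2 * card F))"
    using b cF by (intro mult_left_mono) auto
  moreover have "(4 * real (card F)) * (1 / (2 * card F)) = 2" using cF by simp
  ultimately show False by linarith
qed

definition sbk where "sbk a = (LEAST k. 1 / real (Suc k) < c a)"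
definition sb where "sb a = eb (sbk a)"

lemma sbk: "1 / real (Suc (sbk a)) < c a"
proof -
  obtain k :: nat where "1 / real (Suc k) < c a" using c_pos[of a]
    by (metis nat_approx_posE of_nat_Suc)
  then show ?thesis unfolding sbk_def by (rule LeastI)
qed

lemma lam_le: "lam (y j) \<le> exp K"
proof -
  have "ln (lam (y j)) \<le> K" using lam_K[of j] by simp
  then show ?thesis using lam_pos[of j] by (metis exp_le_cancel_iff exp_ln)
qed

lemma succ_bound:
  assumes \<rho>: "\<rho> \<in> Efib A \<theta> (\<theta> (y j))" and a: "A (y j) a (\<rho> 0)"
  shows "\<rho> 0 < sb a"
proof (rule ccontr)
  assume "\<not> ?thesis"
  then have "eb (sbk a) \<le> \<rho> 0" unfolding sb_def by simp
  moreover have "\<rho> \<in> cyl A \<theta> (\<theta> (y j)) {\<rho> 0}" using \<rho> by (simp add: cyl_def)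
  ultimately have "Lop A \<phi> (y j) (\<lambda>_. 1) \<rho> \<le> 1 / Suc (sbk a)" by (rule condB)
  moreover have "1 * exp (\<phi> (y j) (case_nat a \<rho>)) \<le> Lop A \<phi> (y j) (\<lambda>_. 1) \<rho>"
    by (rule F.L_ge_term[where G=1]) (use \<rho> a in auto)
  moreover have "case_nat a \<rho> \<in> cyl A \<theta> (y j) {a}" using \<rho> a by (simp add: cyl_def Efib_cons)
  then have "c a \<le> exp (\<phi> (y j) (case_nat a \<rho>))" using bnd by blast
  ultimately show False using sbk[of a] by simp
qed

lemma chain_step:
  assumes \<rho>: "\<rho> \<in> Efib A \<theta> (\<theta> (y j))" and a: "A (y j) a (\<rho> 0)"
  shows "f j (case_nat a \<rho>) \<le> exp K / c a * f (Suc j) \<rho>"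
proof -
  obtain B where B: "\<forall>w\<in>S j. \<bar>f j w\<bar> \<le> B" using f_bounded by blast
  have cyl: "case_nat a \<rho> \<in> cyl A \<theta> (y j) {a}" using \<rho> a by (simp add: cyl_def Efib_cons)
  then have ca: "c a \<le> exp (\<phi> (y j) (case_nat a \<rho>))" using bnd by blast
  have cS: "case_nat a \<rho> \<in> S j" using cyl by (simp add: cyl_def)
  have f0: "0 \<le> f j (case_nat a \<rho>)" by (rule f_nonneg[OF cS])
  have "f j (case_nat a \<rho>) * c a \<le> f j (case_nat a \<rho>) * exp (\<phi> (y j) (case_nat a \<rho>))"
    using ca f0 by (rule mult_left_mono)
  also have "\<dots> \<le> Lop A \<phi> (y j) (f j) \<rho>"
    by (rule F.L_ge_term[where G=B]) (use \<rho> a B f_nonneg in auto)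
  also have "\<dots> = lam (y j) * f (Suc j) \<rho>" unfolding P_Suc using lam_pos[of j] by simp
  also have "\<dots> \<le> exp K * f (Suc j) \<rho>"
    using lam_le[of j] f_nonneg[of \<rho> "Suc j"] \<rho> by (intro mult_right_mono) auto
  finally show ?thesis using c_pos[of a] by (simp add: field_simps)
qed

end


context core begin

definition Nmax where "Nmax e = Max (Nm e ` F)"
definition Lw where "Lw e = Nmax e + 2"
definition gb where "gb e k = ((\<lambda>m. Suc (Max (sb ` {..<m}))) ^^ k) (Suc e)"
definition Gs where "Gs e = (\<Sum>k\<le>Lw e. gb e k)"
definition cm where "cm e = Min (c ` {..< Gs e})"
definition R where "R e = exp K / cm e"
definition Qe where "Qe e = D * R e ^ Lw e * (4 * card F)"

lemma yy: "(\<theta>^^j) ((\<theta>^^n) x) = (\<theta>^^(n + j)) x"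
  by (simp add: funpow_add add.commute)

lemma gb_Suc: "gb e (Suc k) = Suc (Max (sb ` {..<gb e k}))"
  unfolding gb_def by simp

lemma gb_le_Gs: "k \<le> Lw e \<Longrightarrow> gb e k \<le> Gs e"
  unfolding Gs_def by (rule member_le_sum) auto

lemma Gs_pos: "0 < Gs e"
  using gb_le_Gs[of 0 e] by (simp add: gb_def)

lemma cm_pos: "0 < cm e"
  unfolding cm_def using Gs_pos c_pos by (subst Min_gr_iff) auto

lemma cm_le: "a < Gs e \<Longrightarrow> cm e \<le> c a"
  unfolding cm_def by (rule Min_le) auto

lemma R_pos: "0 < R e" unfolding R_def using cm_pos by simp

lemma stepA:
  assumes eF: "e \<in> F" and \<rho>: "\<rho> \<in> cyl A \<theta> (y n) {e}"
  shows "f n \<rho> \<le> Qe e"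
proof -
  define L where "L = Lw e"
  define m where "m = n + L"
  obtain b where bF: "b \<in> F" and bm: "measure (\<nu> (y m)) (cyl A \<theta> (y m) {b}) \<ge> 1 / (2 * card F)"
    using exists_big_cyl by blast
  obtain \<tau> where \<tau>: "\<tau> \<in> cyl A \<theta> (y m) {b}" and f\<tau>: "f m \<tau> \<le> 4 * card F"
    using exists_small_point[OF bm] by blast
  have NmN: "Nm e b \<le> Nmax e" unfolding Nmax_def using finF bF by simp
  obtain u where u0: "u 0 = e" and uL: "u (Nmax e + 2) = b"
    and uA: "\<forall>j<Nmax e + 2. A ((\<theta>^^j) ((\<theta>^^n) x)) (u j) (u (Suc j))"
    using mix[OF NmN, of n] by blast
  have Lpos: "0 < L" unfolding L_def Lw_def by simp
  define \<rho>' where "\<rho>' i = (if i < L then u i else \<tau> (i - L))" for i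
  define \<rho>k where "\<rho>k k = (\<lambda>i. \<rho>' (i + k))" for k
  have \<tau>S: "\<tau> \<in> S m" and \<tau>0: "\<tau> 0 = b" using \<tau> by (auto simp: cyl_def)
  have trans: "A (y (n + i)) (\<rho>' i) (\<rho>' (Suc i))" for i
  proof (cases "Suc i < L")
    case True
    then show ?thesis using uA[rule_format, of i] unfolding \<rho>'_def L_def Lw_def
      by (simp add: yy)
  next
    case False
    show ?thesis
    proof (cases "Suc i = L")
      case True
      then have "i < L" by simp
      then show ?thesis using uA[rule_format, of i] True uL \<tau>0 unfolding \<rho>'_def L_def Lw_def
        by (simp add: yy)
    next
      case False
      then have iL: "L \<le> i" using \<open>\<not> Suc i < L\<close> by simp
      have "A ((\<theta>^^(m + (i - L))) x) (\<tau> (i - L)) (\<tau> (Suc (i - L)))"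
        using \<tau>S unfolding Efib_iter by blast
      moreover have "m + (i - L) = n + i" unfolding m_def using iL by simp
      moreover have "Suc (i - L) = Suc i - L" using iL by simp
      ultimately show ?thesis unfolding \<rho>'_def using iL by simp
    qed
  qed
  have \<rho>kS: "\<rho>k k \<in> S (n + k)" for k
    unfolding Efib_iter
  proof
    fix i show "A ((\<theta>^^(n + k + i)) x) (\<rho>k k i) (\<rho>k k (Suc i))"
      using trans[of "i + k"] unfolding \<rho>k_def by (simp add: add.commute add.left_commute)
  qed
  have \<rho>kcons: "\<rho>k k = case_nat (\<rho>' k) (\<rho>k (Suc k))" for k
    unfolding \<rho>k_def by (rule ext) (simp split: nat.split)
  have \<rho>kL: "\<rho>k L = \<tau>" unfolding \<rho>k_def \<rho>'_def by (rule ext) simp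
  have \<rho>'0: "\<rho>' 0 = e" unfolding \<rho>'_def using Lpos u0 by simp
  have \<rho>k0: "\<rho>k k 0 = \<rho>' k" for k unfolding \<rho>k_def by simp
  have letters: "k < L \<Longrightarrow> \<rho>' k < gb e k" for k
  proof (induction k)
    case 0 then show ?case using \<rho>'0 by (simp add: gb_def)
  next
    case (Suc k)
    have A1: "A (y (n + k)) (\<rho>' k) (\<rho>' (Suc k))" by (rule trans)
    have S1: "\<rho>k (Suc k) \<in> Efib A \<theta> (\<theta> (y (n + k)))" using \<rho>kS[of "Suc k"] by simp
    have "\<rho>' (Suc k) < sb (\<rho>' k)" using succ_bound[OF S1] A1 \<rho>k0 by simp
    also have "sb (\<rho>' k) \<le> Max (sb ` {..<gb e k})" using Suc by (intro Max_ge) auto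
    finally show ?case unfolding gb_Suc by simp
  qed
  have chain: "d \<le> L \<Longrightarrow> f (n + (L - d)) (\<rho>k (L - d)) \<le> R e ^ d * f m \<tau>" for d
  proof (induction d)
    case 0 then show ?case using \<rho>kL unfolding m_def by simp
  next
    case (Suc d)
    define k where "k = L - Suc d"
    have kL: "k < L" and k1: "Suc k = L - d" unfolding k_def using Suc.prems by auto
    have S1: "\<rho>k (Suc k) \<in> Efib A \<theta> (\<theta> (y (n + k)))" using \<rho>kS[of "Suc k"] by simp
    have A1: "A (y (n + k)) (\<rho>' k) (\<rho>k (Suc k) 0)" using trans[of k] \<rho>k0 by simp
    have "f (n + k) (\<rho>k k) = f (n + k) (case_nat (\<rho>' k) (\<rho>k (Suc k)))" using \<rho>kcons[of k] by simp
    also have "\<dots> \<le> exp K / c (\<rho>' k) * f (Suc (n + k)) (\<rho>k (Suc k))"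
      by (rule chain_step[OF S1 A1])
    also have "\<dots> \<le> R e * f (Suc (n + k)) (\<rho>k (Suc k))"
    proof (rule mult_right_mono)
      have "\<rho>' k < Gs e" using letters[OF kL] gb_le_Gs[of k e] kL unfolding L_def by simp
      then have "cm e \<le> c (\<rho>' k)" by (rule cm_le)
      then show "exp K / c (\<rho>' k) \<le> R e" unfolding R_def using cm_pos[of e]
        by (simp add: frac_le)
      show "0 \<le> f (Suc (n + k)) (\<rho>k (Suc k))" by (rule f_nonneg) (use \<rho>kS[of "Suc k"] in simp)
    qed
    also have "\<dots> \<le> R e * (R e ^ d * f m \<tau>)"
    proof -
      have eq: "Suc (n + k) = n + (L - d)" using k1 by simp
      have "f (Suc (n+k)) (\<rho>k (Suc k)) = f (n + (L-d)) (\<rho>k (L-d))" by (simp only: eq k1)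
      also have "\<dots> \<le> R e ^ d * f m \<tau>" using Suc.IH Suc.prems by simp
      finally show ?thesis using R_pos[of e] by (intro mult_left_mono) auto
    qed
    finally show ?case unfolding k_def by simp
  qed
  have "f n (\<rho>k 0) \<le> R e ^ L * f m \<tau>" using chain[of L] by simp
  also have "\<dots> \<le> R e ^ L * (4 * card F)" using f\<tau> R_pos[of e] by (intro mult_left_mono) auto
  finally have fr: "f n (\<rho>k 0) \<le> R e ^ L * (4 * card F)" .
  have "\<rho> \<in> S n" "\<rho> 0 = e" using \<rho> by (auto simp: cyl_def)
  then have "f n \<rho> \<le> D * f n (\<rho>k 0)"
    using distortion'[of \<rho> n "\<rho>k 0"] \<rho>kS[of 0] \<rho>k0 \<rho>'0 by simp
  also have "\<dots> \<le> D * (R e ^ L * (4 * card F))"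
    using fr by (intro mult_left_mono) (auto simp: D_def)
  finally show ?thesis unfolding Qe_def L_def by simp
qed

definition Q where "Q = Max (Qe ` F)"

lemma Q_bound: "\<rho> \<in> cyl A \<theta> (y n) F \<Longrightarrow> f n \<rho> \<le> Q"
proof -
  assume "\<rho> \<in> cyl A \<theta> (y n) F"
  then have e: "\<rho> 0 \<in> F" and "\<rho> \<in> cyl A \<theta> (y n) {\<rho> 0}" by (auto simp: cyl_def)
  then have "f n \<rho> \<le> Qe (\<rho> 0)" by (intro stepA)
  also have "\<dots> \<le> Q" unfolding Q_def using finF e by simp
  finally show ?thesis .
qed

end


context core begin

lemma inv_lam_le: "1 / lam (y j) \<le> exp K"
proof -
  have "- K \<le> ln (lam (y j))" using lam_K[of j] by simp
  then have "exp (- K) \<le> lam (y j)" using lam_pos[of j] by (metis exp_le_cancel_iff exp_ln)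
  then show ?thesis using lam_pos[of j] by (simp add: exp_minus field_simps)
qed

lemma good_w':
  "\<exists>w'\<in>cyl A \<theta> (\<theta> (y n)) F. Lop A \<phi> (y n) (\<lambda>_. 1) w' \<le> 3 * lam (y n)"
proof (rule ccontr)
  assume "\<not> ?thesis"
  then have gt: "\<And>w'. w' \<in> cyl A \<theta> (y (Suc n)) F \<Longrightarrow> 3 * lam (y n) < Lop A \<phi> (y n) (\<lambda>_. 1) w'" by force
  interpret P: prob_space "\<nu> (y (Suc n))" by (rule prob)
  let ?h = "Lop A \<phi> (y n) (\<lambda>_. 1)"
  have ih: "(\<integral>w. ?h w \<partial>\<nu> (y (Suc n))) = lam (y n)"
    using conf[OF Cb_const[of 1], of n] prob_space.prob_space[OF prob[of n]] by simp
  have hint: "integrable (\<nu> (y (Suc n))) ?h"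
    using ih lam_pos[of n] not_integrable_integral_eq by fastforce
  have int2: "integrable (\<nu> (y (Suc n))) (\<lambda>w. (3 * lam (y n)) * indicator (cyl A \<theta> (y (Suc n)) F) w)"
  proof (intro integrable_mult_right)
    have e: "cyl A \<theta> (y (Suc n)) F \<inter> space (\<nu> (y (Suc n))) = cyl A \<theta> (y (Suc n)) F"
      using space_nu[of "Suc n"] by (auto simp: cyl_def)
    show "integrable (\<nu> (y (Suc n))) (indicator (cyl A \<theta> (y (Suc n)) F) :: _ \<Rightarrow> real)"
      unfolding integrable_indicator_iff e
    proof
      show "cyl A \<theta> (y (Suc n)) F \<in> sets (\<nu> (y (Suc n)))" by (rule cyl_sets)
      have "emeasure (\<nu> (y (Suc n))) (cyl A \<theta> (y (Suc n)) F) \<noteq> \<top>" by (rule P.emeasure_finite)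
      then show "emeasure (\<nu> (y (Suc n))) (cyl A \<theta> (y (Suc n)) F) < \<infinity>" by (simp add: less_top[symmetric])
    qed
  qed
  have "(\<integral>w. (3 * lam (y n)) * indicator (cyl A \<theta> (y (Suc n)) F) w \<partial>\<nu> (y (Suc n))) \<le> (\<integral>w. ?h w \<partial>\<nu> (y (Suc n)))"
  proof (rule integral_mono[OF int2 hint])
    fix w assume "w \<in> space (\<nu> (y (Suc n)))"
    then have w: "w \<in> Efib A \<theta> (\<theta> (y n))" using space_nu[of "Suc n"] by simp
    have "0 \<le> ?h w" by (rule F.L_nonneg) (use w in auto)
    then show "(3 * lam (y n)) * indicator (cyl A \<theta> (y (Suc n)) F) w \<le> ?h w"
      using gt[of w] by (cases "w \<in> cyl A \<theta> (y (Suc n)) F") (auto simp: indicator_def)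
  qed
  also have "\<dots> = lam (y n)" by (rule ih)
  finally have "(3 * lam (y n)) * measure (\<nu> (y (Suc n))) (cyl A \<theta> (y (Suc n)) F) \<le> lam (y n)"
    using cyl_sets[of "Suc n" F] space_nu[of "Suc n"] by (simp add: Int_absorb2 cyl_def)
  moreover have "(3 * lam (y n)) * measure (\<nu> (y (Suc n))) (cyl A \<theta> (y (Suc n)) F) \<ge> (3 * lam (y n)) * (1/2)"
    using half[of "Suc n"] lam_pos[of n] by (intro mult_left_mono) auto
  ultimately show False using lam_pos[of n] by simp
qed

definition Q' where "Q' = max Q 0"
definition Mh where "Mh = max 1 (4 * exp K * Q' * BL)"

lemma BL_pos: "BL \<ge> 1" unfolding BL_def by (simp add: sum_nonneg)

lemma main_bound: "w \<in> S n \<Longrightarrow> f n w \<le> Mh"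
proof (induction n arbitrary: w)
  case 0 then show ?case by (simp add: Mh_def)
next
  case (Suc n)
  have w: "w \<in> Efib A \<theta> (\<theta> (y n))" using Suc.prems by simp
  obtain B where B: "\<forall>v\<in>S n. \<bar>f n v\<bar> \<le> B" using f_bounded by blast
  have Q'0: "Q' \<ge> 0" and QQ: "Q \<le> Q'" unfolding Q'_def by auto
  have Mh1: "Mh \<ge> 1" unfolding Mh_def by simp
  let ?ind = "indicator (S n - cyl A \<theta> (y n) F) :: _ \<Rightarrow> real"
  let ?h = "\<lambda>v. Q' * 1 + Mh * ?ind v"
  have "Lop A \<phi> (y n) (f n) w \<le> Lop A \<phi> (y n) ?h w"
  proof (rule F.L_mono[where G=B and H="Q' + Mh"])
    show "\<bar>?h v\<bar> \<le> Q' + Mh" for v using Q'0 Mh1 by (auto simp: indicator_def)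
    fix v assume v: "v \<in> S n"
    show "f n v \<le> ?h v"
    proof (cases "v \<in> cyl A \<theta> (y n) F")
      case True then show ?thesis using Q_bound[OF True] QQ Mh1 by (simp add: indicator_def)
    next
      case False then show ?thesis using Suc.IH[OF v] Q'0 v by (simp add: indicator_def)
    qed
  qed (use B w in auto)
  also have "Lop A \<phi> (y n) ?h w = Q' * Lop A \<phi> (y n) (\<lambda>_. 1) w + Mh * Lop A \<phi> (y n) ?ind w"
  proof -
    have "Lop A \<phi> (y n) ?h w = Lop A \<phi> (y n) (\<lambda>v. Q' * 1) w + Lop A \<phi> (y n) (\<lambda>v. Mh * ?ind v) w"
      by (rule F.L_add[where G="\<bar>Q'\<bar>" and H="\<bar>Mh\<bar>"]) (use w in \<open>auto simp: indicator_def abs_mult\<close>)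
    then show ?thesis using F.L_cmult[where c="Q'" and g="\<lambda>_. 1" and i=n and w=w] F.L_cmult[where c=Mh and g="?ind" and i=n and w=w] by simp
  qed
  also have "\<dots> \<le> Q' * BL + Mh * (\<kappa> * (3 * lam (y n)))"
  proof (rule add_mono)
    show "Q' * Lop A \<phi> (y n) (\<lambda>_. 1) w \<le> Q' * BL" using BL_bound[OF w] Q'0 by (rule mult_left_mono)
    obtain w' where w': "w' \<in> cyl A \<theta> (\<theta> (y n)) F" and hw': "Lop A \<phi> (y n) (\<lambda>_. 1) w' \<le> 3 * lam (y n)"
      using good_w' by blast
    have "Lop A \<phi> (y n) ?ind w \<le> \<kappa> * Lop A \<phi> (y n) (\<lambda>_. 1) w'" by (rule condC[OF w w'])
    also have "\<dots> \<le> \<kappa> * (3 * lam (y n))" using hw' kappa by (intro mult_left_mono) auto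
    finally show "Mh * Lop A \<phi> (y n) ?ind w \<le> Mh * (\<kappa> * (3 * lam (y n)))" using Mh1 by (intro mult_left_mono) auto
  qed
  finally have Lb: "Lop A \<phi> (y n) (f n) w \<le> Q' * BL + Mh * (\<kappa> * (3 * lam (y n)))" .
  have lp: "lam (y n) > 0" by (rule lam_pos)
  have "f (Suc n) w = Lop A \<phi> (y n) (f n) w / lam (y n)" unfolding P_Suc ..
  also have "\<dots> \<le> (Q' * BL + Mh * (\<kappa> * (3 * lam (y n)))) / lam (y n)" using Lb lp by (simp add: divide_right_mono)
  also have "\<dots> = Q' * BL * (1 / lam (y n)) + 3 * \<kappa> * Mh" using lp by (simp add: field_simps)
  also have "\<dots> \<le> Q' * BL * exp K + 3 * \<kappa> * Mh"
    using inv_lam_le[of n] Q'0 BL_pos kappa by (intro add_mono mult_left_mono) auto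
  also have "\<dots> \<le> Mh"
  proof -
    have "4 * exp K * Q' * BL \<le> Mh" unfolding Mh_def by simp
    moreover have "3 * \<kappa> * Mh \<le> 3/4 * Mh" using kappa Mh1 by (intro mult_right_mono) auto
    ultimately show ?thesis by (simp add: algebra_simps)
  qed
  finally show ?case .
qed

lemma supnorm_le1: "supnorm T g \<le> 1 \<Longrightarrow> w \<in> T \<Longrightarrow> \<bar>g w\<bar> \<le> 1"
  unfolding supnorm_def by (metis SUP_le_iff ennreal_le_1)

lemma P_abs: "g \<in> Cb (S 0) \<Longrightarrow> supnorm (S 0) g \<le> 1 \<Longrightarrow> w \<in> S n \<Longrightarrow> \<bar>P n g w\<bar> \<le> f n w"
proof (induction n arbitrary: w)
  case 0 then show ?case using supnorm_le1 by simp
next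
  case (Suc n)
  have w: "w \<in> Efib A \<theta> (\<theta> (y n))" using Suc.prems by simp
  obtain B where B: "\<forall>v\<in>S n. \<bar>f n v\<bar> \<le> B" using f_bounded by blast
  have "\<bar>Lop A \<phi> (y n) (P n g) w\<bar> \<le> Lop A \<phi> (y n) (f n) w"
    by (rule F.L_abs[where H=B]) (use Suc B w in auto)
  then show ?case unfolding P_Suc using lam_pos[of n] by (simp add: abs_divide divide_right_mono)
qed

lemma final:
  "opnorm (S 0) (S n) (P n) = supnorm (S n) (f n) \<and> supnorm (S n) (f n) \<le> ennreal Mh"
proof
  show "opnorm (S 0) (S n) (P n) = supnorm (S n) (f n)"
  proof (rule antisym)
    show "opnorm (S 0) (S n) (P n) \<le> supnorm (S n) (f n)"
      unfolding opnorm_def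
    proof (rule SUP_least)
      fix g assume g: "g \<in> {g \<in> Cb (S 0). supnorm (S 0) g \<le> 1}"
      show "supnorm (S n) (P n g) \<le> supnorm (S n) (f n)"
        unfolding supnorm_def
      proof (rule SUP_mono)
        fix w assume w: "w \<in> S n"
        have "ennreal \<bar>P n g w\<bar> \<le> ennreal \<bar>f n w\<bar>"
          using P_abs[of g w n] g w f_nonneg[OF w] by (intro ennreal_leI) auto
        then show "\<exists>w'\<in>S n. ennreal \<bar>P n g w\<bar> \<le> ennreal \<bar>f n w'\<bar>" using w by blast
      qed
    qed
    have "(\<lambda>_. 1) \<in> {g \<in> Cb (S 0). supnorm (S 0) g \<le> 1}"
      using Cb_const by (auto simp: supnorm_def intro: SUP_least)
    then show "supnorm (S n) (f n) \<le> opnorm (S 0) (S n) (P n)"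
      unfolding opnorm_def by (rule SUP_upper)
  qed
  show "supnorm (S n) (f n) \<le> ennreal Mh"
    unfolding supnorm_def
  proof (rule SUP_least)
    fix w assume w: "w \<in> S n"
    show "ennreal \<bar>f n w\<bar> \<le> ennreal Mh" using main_bound[OF w] f_nonneg[OF w] by (intro ennreal_leI) simp
  qed
qed

end


lemma AE_step:
  assumes th: "\<theta> \<in> M \<rightarrow>\<^sub>M M" and d: "distr M M \<theta> = M" and ae: "AE y in M. P y"
  shows "AE x in M. P (\<theta> x)"
proof -
  obtain N where N: "{y \<in> space M. \<not> P y} \<subseteq> N" "N \<in> sets M" "emeasure M N = 0"
    using ae by (auto elim!: AE_E)
  have s: "\<theta> -` N \<inter> space M \<in> sets M" using th N(2) by (rule measurable_sets)
  have "emeasure M (\<theta> -` N \<inter> space M) = emeasure (distr M M \<theta>) N"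
    using th N(2) by (simp add: emeasure_distr)
  also have "\<dots> = 0" using d N(3) by simp
  finally have z: "emeasure M (\<theta> -` N \<inter> space M) = 0" .
  show ?thesis
  proof (rule AE_I[OF _ z s])
    show "{x \<in> space M. \<not> P (\<theta> x)} \<subseteq> \<theta> -` N \<inter> space M"
      using N(1) measurable_space[OF th] by auto
  qed
qed

lemma AE_funpow:
  assumes th: "\<theta> \<in> M \<rightarrow>\<^sub>M M" and d: "distr M M \<theta> = M"
  shows "AE y in M. P y \<Longrightarrow> AE x in M. P ((\<theta>^^i) x)"
proof (induction i arbitrary: P)
  case 0 then show ?case by simp
next
  case (Suc i)
  have "AE x in M. P ((\<theta>^^i) x)" by (rule Suc.IH[OF Suc.prems])
  then have "AE x in M. P ((\<theta>^^i) (\<theta> x))" by (rule AE_step[OF th d])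
  then show ?case by (simp add: funpow_Suc_right del: funpow.simps)
qed

lemma funpow_space: "\<theta> \<in> M \<rightarrow>\<^sub>M M \<Longrightarrow> x \<in> space M \<Longrightarrow> (\<theta>^^i) x \<in> space M"
  by (induction i) (auto simp: measurable_space)



theorem proposition4p3:
  fixes M :: "'a measure" and \<theta> :: "'a \<Rightarrow> 'a" and A :: "'a \<Rightarrow> nat \<Rightarrow> nat \<Rightarrow> bool"
    and \<alpha> :: real and \<phi> :: "'a \<Rightarrow> (nat \<Rightarrow> nat) \<Rightarrow> real" and F :: "nat set"
    and \<nu> :: "'a \<Rightarrow> (nat \<Rightarrow> nat) measure" and lam :: "'a \<Rightarrow> real"
  assumes "standing_setup M \<theta> A"
    and "0 < \<alpha>"
    and "fine_potential M \<theta> A \<alpha> \<phi> F"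
    and "fixed_conformal M \<theta> A \<phi> F \<nu> lam"
  shows "\<exists>Mhat::real. \<forall>n. AE x in M.
           opnorm (Efib A \<theta> x) (Efib A \<theta> ((\<theta> ^^ n) x)) (Lhat_pow A \<theta> \<phi> lam n x)
             = supnorm (Efib A \<theta> ((\<theta> ^^ n) x)) (Lhat_pow A \<theta> \<phi> lam n x (\<lambda>_. 1))
           \<and> supnorm (Efib A \<theta> ((\<theta> ^^ n) x)) (Lhat_pow A \<theta> \<phi> lam n x (\<lambda>_. 1)) \<le> ennreal Mhat"
proof -
  note ss = assms(1)[unfolded standing_setup_def]
  have th: "\<theta> \<in> M \<rightarrow>\<^sub>M M" and d: "distr M M \<theta> = M" using ss by auto
  have mix0: "\<forall>a b. \<exists>N. \<forall>n\<ge>N. \<forall>x\<in>space M. \<exists>w :: nat \<Rightarrow> nat.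
         w 0 = a \<and> w (n + 2) = b \<and> (\<forall>i<n + 2. A ((\<theta> ^^ i) x) (w i) (w (Suc i)))" using ss by blast
  define Nm where "Nm a b = (SOME N. \<forall>n\<ge>N. \<forall>x\<in>space M. \<exists>w :: nat \<Rightarrow> nat.
         w 0 = a \<and> w (n + 2) = b \<and> (\<forall>i<n + 2. A ((\<theta> ^^ i) x) (w i) (w (Suc i))))" for a b
  have Nm0: "\<forall>n\<ge>Nm a b. \<forall>x\<in>space M. \<exists>w :: nat \<Rightarrow> nat.
         w 0 = a \<and> w (n + 2) = b \<and> (\<forall>i<n + 2. A ((\<theta> ^^ i) x) (w i) (w (Suc i)))" for a b
    unfolding Nm_def by (rule someI_ex) (use mix0 in blast)
  have Nm: "\<And>a b n x. Nm a b \<le> n \<Longrightarrow> x \<in> space M \<Longrightarrow> \<exists>w :: nat \<Rightarrow> nat.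
         w 0 = a \<and> w (n + 2) = b \<and> (\<forall>i<n + 2. A ((\<theta> ^^ i) x) (w i) (w (Suc i)))"
    using Nm0 by blast
  note fp = assms(3)[unfolded fine_potential_def]
  have sp: "summable_potential M \<theta> A \<alpha> \<phi>" using fp by blast
  note sp' = sp[unfolded summable_potential_def]
  have phicont: "\<And>x. x \<in> space M \<Longrightarrow> dcont_on (Efib A \<theta> x) (\<phi> x)" using sp' by blast
  obtain Kv where Kv: "AE x in M. v_alpha \<alpha> (Efib A \<theta> x) (\<phi> x) \<le> ereal Kv" using sp' by blast
  define cC where "cC e = (SOME cC. 0 < fst cC \<and> fst cC < snd cC \<and>
         (AE x in M. \<forall>w\<in>cyl A \<theta> x {e}. fst cC \<le> exp (\<phi> x w) \<and> exp (\<phi> x w) \<le> snd cC))" for e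
  have cC: "0 < fst (cC e) \<and> fst (cC e) < snd (cC e) \<and>
         (AE x in M. \<forall>w\<in>cyl A \<theta> x {e}. fst (cC e) \<le> exp (\<phi> x w) \<and> exp (\<phi> x w) \<le> snd (cC e))" for e
  proof -
    obtain c0 C0 where "0 < c0 \<and> c0 < C0 \<and> (AE x in M. \<forall>w\<in>cyl A \<theta> x {e}. c0 \<le> exp (\<phi> x w) \<and> exp (\<phi> x w) \<le> C0)"
      using sp' by blast
    then have "\<exists>cC. 0 < fst cC \<and> fst cC < snd cC \<and>
         (AE x in M. \<forall>w\<in>cyl A \<theta> x {e}. fst cC \<le> exp (\<phi> x w) \<and> exp (\<phi> x w) \<le> snd cC)"
      by (intro exI[of _ "(c0, C0)"]) simp
    then show ?thesis unfolding cC_def by (rule someI_ex)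
  qed
  define c where "c e = fst (cC e)" for e
  define C where "C e = snd (cC e)" for e
  define lt where "lt k = (SOME l0. \<forall>l\<ge>l0. AE x in M. \<forall>w\<in>Efib A \<theta> (\<theta> x).
         Lop A \<phi> x (indicator (Efib A \<theta> x - cyl A \<theta> x {0..l})) w \<le> 1 / Suc k)" for k :: nat
  have lt0: "\<forall>l\<ge>lt k. AE x in M. \<forall>w\<in>Efib A \<theta> (\<theta> x).
         Lop A \<phi> x (indicator (Efib A \<theta> x - cyl A \<theta> x {0..l})) w \<le> 1 / Suc k" for k
  proof -
    have "(1::real) / Suc k > 0" by simp
    then have "\<exists>l0. \<forall>l\<ge>l0. AE x in M. \<forall>w\<in>Efib A \<theta> (\<theta> x).
         Lop A \<phi> x (indicator (Efib A \<theta> x - cyl A \<theta> x {0..l})) w \<le> 1 / Suc k"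
      using sp' by blast
    then show ?thesis unfolding lt_def by (rule someI_ex)
  qed
  have lt: "AE x in M. \<forall>w\<in>Efib A \<theta> (\<theta> x).
         Lop A \<phi> x (indicator (Efib A \<theta> x - cyl A \<theta> x {0..lt k})) w \<le> 1 / Suc k" for k
    using lt0[of k] by blast
  have cA: "\<forall>e. \<exists>Me>0. AE x in M. \<forall>w\<in>cyl A \<theta> (\<theta> x) {e}. 1 / Me \<le> Lop A \<phi> x (\<lambda>_. 1) w"
    using fp unfolding condA_def by blast
  define Me where "Me e = (SOME Me. Me > 0 \<and> (AE x in M. \<forall>w\<in>cyl A \<theta> (\<theta> x) {e}. 1 / Me \<le> Lop A \<phi> x (\<lambda>_. 1) w))" for e
  have Me0: "Me e > 0 \<and> (AE x in M. \<forall>w\<in>cyl A \<theta> (\<theta> x) {e}. 1 / Me e \<le> Lop A \<phi> x (\<lambda>_. 1) w)" for e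
    unfolding Me_def by (rule someI_ex) (use cA in blast)
  have Me: "\<And>e. Me e > 0" "\<And>e. AE x in M. \<forall>w\<in>cyl A \<theta> (\<theta> x) {e}. 1 / Me e \<le> Lop A \<phi> x (\<lambda>_. 1) w"
    using Me0 by auto
  define eb where "eb k = (SOME e0. \<forall>e\<ge>e0. AE x in M. \<forall>w\<in>cyl A \<theta> (\<theta> x) {e}. Lop A \<phi> x (\<lambda>_. 1) w \<le> 1 / Suc k)" for k :: nat
  have eb0: "\<forall>e\<ge>eb k. AE x in M. \<forall>w\<in>cyl A \<theta> (\<theta> x) {e}. Lop A \<phi> x (\<lambda>_. 1) w \<le> 1 / Suc k" for k
  proof -
    have "(1::real) / Suc k > 0" by simp
    then have "\<exists>e0. \<forall>e\<ge>e0. AE x in M. \<forall>w\<in>cyl A \<theta> (\<theta> x) {e}. Lop A \<phi> x (\<lambda>_. 1) w \<le> 1 / Suc k"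
      using fp unfolding condB_def by blast
    then show ?thesis unfolding eb_def by (rule someI_ex)
  qed
  have eb: "\<And>k e. eb k \<le> e \<Longrightarrow> AE x in M. \<forall>w\<in>cyl A \<theta> (\<theta> x) {e}. Lop A \<phi> x (\<lambda>_. 1) w \<le> 1 / Suc k"
    using eb0 by blast
  obtain \<kappa> where kap: "condC_with M \<theta> A \<phi> \<kappa> F" using fp by blast
  note kap' = kap[unfolded condC_with_def]
  note fc = assms(4)[unfolded fixed_conformal_def random_measure_def]
  obtain K where K: "AE x in M. \<bar>ln (lam x)\<bar> \<le> K" using fc by blast
  define V where "V = max Kv 0"
  define Good where "Good y \<longleftrightarrow>
      (\<forall>e. \<forall>w\<in>cyl A \<theta> (\<theta> y) {e}. 1 / Me e \<le> Lop A \<phi> y (\<lambda>_. 1) w)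
    \<and> v_alpha \<alpha> (Efib A \<theta> y) (\<phi> y) \<le> ereal Kv
    \<and> (\<forall>e. \<forall>w\<in>cyl A \<theta> y {e}. c e \<le> exp (\<phi> y w) \<and> exp (\<phi> y w) \<le> C e)
    \<and> (\<forall>k. \<forall>w\<in>Efib A \<theta> (\<theta> y). Lop A \<phi> y (indicator (Efib A \<theta> y - cyl A \<theta> y {0..lt k})) w \<le> 1 / Suc k)
    \<and> (\<forall>k e. eb k \<le> e \<longrightarrow> (\<forall>w\<in>cyl A \<theta> (\<theta> y) {e}. Lop A \<phi> y (\<lambda>_. 1) w \<le> 1 / Suc k))
    \<and> (\<forall>w\<in>Efib A \<theta> (\<theta> y). \<forall>w'\<in>cyl A \<theta> (\<theta> y) F.
        Lop A \<phi> y (indicator (Efib A \<theta> y - cyl A \<theta> y F)) w \<le> \<kappa> * Lop A \<phi> y (\<lambda>_. 1) w')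
    \<and> (\<forall>g\<in>Cb (Efib A \<theta> y). (\<integral>w. Lop A \<phi> y g w \<partial>\<nu> (\<theta> y)) = lam y * (\<integral>w. g w \<partial>\<nu> y))
    \<and> \<bar>ln (lam y)\<bar> \<le> K
    \<and> measure (\<nu> y) (cyl A \<theta> y F) \<ge> 1/2" for y
  have G1: "AE y in M. Good y"
  proof -
    have a1: "AE y in M. \<forall>e. \<forall>w\<in>cyl A \<theta> (\<theta> y) {e}. 1 / Me e \<le> Lop A \<phi> y (\<lambda>_. 1) w"
      using Me(2) by (simp add: AE_all_countable)
    have a3: "AE y in M. \<forall>e. \<forall>w\<in>cyl A \<theta> y {e}. c e \<le> exp (\<phi> y w) \<and> exp (\<phi> y w) \<le> C e"
      using cC unfolding c_def C_def by (simp add: AE_all_countable)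
    have a4: "AE y in M. \<forall>k. \<forall>w\<in>Efib A \<theta> (\<theta> y). Lop A \<phi> y (indicator (Efib A \<theta> y - cyl A \<theta> y {0..lt k})) w \<le> 1 / Suc k"
      using lt by (simp add: AE_all_countable)
    have a5: "AE y in M. \<forall>k e. eb k \<le> e \<longrightarrow> (\<forall>w\<in>cyl A \<theta> (\<theta> y) {e}. Lop A \<phi> y (\<lambda>_. 1) w \<le> 1 / Suc k)"
    proof -
      have "\<And>k e. AE y in M. eb k \<le> e \<longrightarrow> (\<forall>w\<in>cyl A \<theta> (\<theta> y) {e}. Lop A \<phi> y (\<lambda>_. 1) w \<le> 1 / Suc k)"
      proof -
        fix k e show "AE y in M. eb k \<le> e \<longrightarrow> (\<forall>w\<in>cyl A \<theta> (\<theta> y) {e}. Lop A \<phi> y (\<lambda>_. 1) w \<le> 1 / Suc k)"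
          by (cases "eb k \<le> e") (use eb in auto)
      qed
      then show ?thesis by (simp add: AE_all_countable)
    qed
    have a6: "AE y in M. \<forall>w\<in>Efib A \<theta> (\<theta> y). \<forall>w'\<in>cyl A \<theta> (\<theta> y) F.
        Lop A \<phi> y (indicator (Efib A \<theta> y - cyl A \<theta> y F)) w \<le> \<kappa> * Lop A \<phi> y (\<lambda>_. 1) w'"
      using kap' by blast
    have a7: "AE y in M. \<forall>g\<in>Cb (Efib A \<theta> y). (\<integral>w. Lop A \<phi> y g w \<partial>\<nu> (\<theta> y)) = lam y * (\<integral>w. g w \<partial>\<nu> y)"
      using fc by blast
    have a9: "AE y in M. measure (\<nu> y) (cyl A \<theta> y F) \<ge> 1/2" using fc by blast
    show ?thesis unfolding Good_def by (intro eventually_conj a1 Kv a3 a4 a5 a6 a7 K a9)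
  qed
  have G2: "AE x in M. \<forall>i. Good ((\<theta>^^i) x)"
    unfolding AE_all_countable using AE_funpow[OF th d G1] by blast
  define Mhat0 where "Mhat0 = core.Mh \<alpha> V K F c C lt eb Nm"
  have main: "opnorm (Efib A \<theta> x) (Efib A \<theta> ((\<theta> ^^ n) x)) (Lhat_pow A \<theta> \<phi> lam n x)
             = supnorm (Efib A \<theta> ((\<theta> ^^ n) x)) (Lhat_pow A \<theta> \<phi> lam n x (\<lambda>_. 1))
           \<and> supnorm (Efib A \<theta> ((\<theta> ^^ n) x)) (Lhat_pow A \<theta> \<phi> lam n x (\<lambda>_. 1)) \<le> ennreal Mhat0"
    if x: "x \<in> space M" and good: "\<forall>i. Good ((\<theta>^^i) x)" for x n
  proof -
    have sp_i: "\<And>i. (\<theta>^^i) x \<in> space M" using funpow_space[OF th x] by blast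
    interpret core A \<theta> \<phi> lam \<nu> x \<alpha> V K \<kappa> F c C Me lt eb Nm
    proof (rule core.intro)
      show "\<And>i e w. w \<in> cyl A \<theta> (\<theta> ((\<theta>^^i) x)) {e} \<Longrightarrow> 1 / Me e \<le> Lop A \<phi> ((\<theta>^^i) x) (\<lambda>_. 1) w"
        using good unfolding Good_def by blast
      show "\<And>e. Me e > 0" by (rule Me(1))
      show "\<alpha> > 0" by (rule assms(2))
      show "V \<ge> 0" unfolding V_def by simp
      show "\<bar>\<phi> ((\<theta>^^i) x) t - \<phi> ((\<theta>^^i) x) w\<bar> \<le> V * dseq t w powr \<alpha>"
        if t: "t \<in> Efib A \<theta> ((\<theta>^^i) x)" and w: "w \<in> Efib A \<theta> ((\<theta>^^i) x)" and tw: "t 0 = w 0" for i t w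
      proof (cases "t = w")
        case True then show ?thesis by (simp add: dseq_def)
      next
        case False
        have dp: "dseq t w > 0" using False by (simp add: dseq_def)
        have va: "v_alpha \<alpha> (Efib A \<theta> ((\<theta>^^i) x)) (\<phi> ((\<theta>^^i) x)) \<le> ereal Kv"
          using good unfolding Good_def by blast
        have "ereal (\<bar>\<phi> ((\<theta>^^i) x) t - \<phi> ((\<theta>^^i) x) w\<bar> / dseq t w powr \<alpha>) \<le> v_alpha \<alpha> (Efib A \<theta> ((\<theta>^^i) x)) (\<phi> ((\<theta>^^i) x))"
          unfolding v_alpha_def by (rule SUP_upper2[of "(t, w)"]) (use t w tw False in auto)
        then have "\<bar>\<phi> ((\<theta>^^i) x) t - \<phi> ((\<theta>^^i) x) w\<bar> / dseq t w powr \<alpha> \<le> V"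
          using va unfolding V_def by (metis ereal_less_eq(3) max.coboundedI1 order.trans)
        then show ?thesis using dp by (simp add: divide_le_eq mult.commute)
      qed
      show "\<And>e. c e > 0" using cC unfolding c_def by blast
      show "\<And>i e w. w \<in> cyl A \<theta> ((\<theta>^^i) x) {e} \<Longrightarrow> c e \<le> exp (\<phi> ((\<theta>^^i) x) w) \<and> exp (\<phi> ((\<theta>^^i) x) w) \<le> C e"
        using good unfolding Good_def by blast
      show "\<And>i. dcont_on (Efib A \<theta> ((\<theta>^^i) x)) (\<phi> ((\<theta>^^i) x))" using phicont sp_i by blast
      show "\<And>k i t. t \<in> Efib A \<theta> (\<theta> ((\<theta>^^i) x)) \<Longrightarrow>
        Lop A \<phi> ((\<theta>^^i) x) (indicator (Efib A \<theta> ((\<theta>^^i) x) - cyl A \<theta> ((\<theta>^^i) x) {0..lt k})) t \<le> 1 / Suc k"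
        using good unfolding Good_def by blast
      show "\<And>k i e w. eb k \<le> e \<Longrightarrow> w \<in> cyl A \<theta> (\<theta> ((\<theta>^^i) x)) {e} \<Longrightarrow> Lop A \<phi> ((\<theta>^^i) x) (\<lambda>_. 1) w \<le> 1 / Suc k"
        using good unfolding Good_def by blast
      show "0 < \<kappa>" "\<kappa> < 1/4" "finite F" using kap' by auto
      show "\<And>i w w'. w \<in> Efib A \<theta> (\<theta> ((\<theta>^^i) x)) \<Longrightarrow> w' \<in> cyl A \<theta> (\<theta> ((\<theta>^^i) x)) F \<Longrightarrow>
        Lop A \<phi> ((\<theta>^^i) x) (indicator (Efib A \<theta> ((\<theta>^^i) x) - cyl A \<theta> ((\<theta>^^i) x) F)) w \<le> \<kappa> * Lop A \<phi> ((\<theta>^^i) x) (\<lambda>_. 1) w'"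
        using good unfolding Good_def by blast
      show "\<And>i g. g \<in> Cb (Efib A \<theta> ((\<theta>^^i) x)) \<Longrightarrow>
        (\<integral>w. Lop A \<phi> ((\<theta>^^i) x) g w \<partial>\<nu> (\<theta> ((\<theta>^^i) x))) = lam ((\<theta>^^i) x) * (\<integral>w. g w \<partial>\<nu> ((\<theta>^^i) x))"
        using good unfolding Good_def by blast
      show "\<And>i. 0 < lam ((\<theta>^^i) x)" using fc sp_i by blast
      show "\<And>i. \<bar>ln (lam ((\<theta>^^i) x))\<bar> \<le> K" using good unfolding Good_def by blast
      show "\<And>i. prob_space (\<nu> ((\<theta>^^i) x))" using fc sp_i by blast
      show "\<And>i. sets (\<nu> ((\<theta>^^i) x)) = sets (restrict_space seqM (Efib A \<theta> ((\<theta>^^i) x)))" using fc sp_i by blast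
      show "\<And>i. measure (\<nu> ((\<theta>^^i) x)) (cyl A \<theta> ((\<theta>^^i) x) F) \<ge> 1/2" using good unfolding Good_def by blast
      show "\<And>a b n i. Nm a b \<le> n \<Longrightarrow> \<exists>w. w 0 = a \<and> w (n + 2) = b \<and>
        (\<forall>j<n + 2. A ((\<theta>^^j) ((\<theta>^^i) x)) (w j) (w (Suc j)))" using Nm sp_i by blast
    qed
    show ?thesis using final[of n] unfolding Mhat0_def by (simp only: funpow_0)
  qed
  show ?thesis
  proof (intro exI[of _ Mhat0] allI)
    fix n
    show "AE x in M. opnorm (Efib A \<theta> x) (Efib A \<theta> ((\<theta> ^^ n) x)) (Lhat_pow A \<theta> \<phi> lam n x)
             = supnorm (Efib A \<theta> ((\<theta> ^^ n) x)) (Lhat_pow A \<theta> \<phi> lam n x (\<lambda>_. 1))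
           \<and> supnorm (Efib A \<theta> ((\<theta> ^^ n) x)) (Lhat_pow A \<theta> \<phi> lam n x (\<lambda>_. 1)) \<le> ennreal Mhat0"
      using G2 AE_space by eventually_elim (use main in blast)
  qed
qed



end
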